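(* Let $\mathcal V$ be a descent category and $f:X\to Y$, $g:Y\to Z$ morphisms of simplicial spaces. If $f$ and $g\circ f$ are hypercovers, then $g$ is a hypercover.
   Context: A descent category is a small category $\mathcal V$ with a subcategory of morphisms called covers such that: $\mathcal V$ has finite limits; pullbacks of covers are covers; if $f$ and $g\circ f$ are covers then $g$ is a cover. A simplicial space is a simplicial object in $\mathcal V$; $\mathrm{Map}(T,X)$ is the finite limit representing simplicial maps $T\to X$ for a finite simplicial set $T$; $\mathrm{Map}(S\hookrightarrow T,f)=\mathrm{Map}(S,X)\times_{\mathrm{Map}(S,Y)}\mathrm{Map}(T,Y)$. A morphism $f:X\to Y$ is a hypercover if $X_n\to\mathrm{Map}(\partial\Delta^n\hookrightarrow\Delta^n,f)$ is a cover for all $n\ge0$. *)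

theory Defs
  imports Main
begin

record ('o, 'm) cat =
  cOb   :: "'o set"
  cAr   :: "'m set"
  cDom  :: "'m \<Rightarrow> 'o"
  cCod  :: "'m \<Rightarrow> 'o"
  cId   :: "'o \<Rightarrow> 'm"
  cComp :: "'m \<Rightarrow> 'm \<Rightarrow> 'm"   (* cComp C g f = g \<circ> f *)

definition hom :: "('o, 'm) cat \<Rightarrow> 'o \<Rightarrow> 'o \<Rightarrow> 'm set" where
  "hom C a b = {f \<in> cAr C. cDom C f = a \<and> cCod C f = b}"

definition category :: "('o, 'm) cat \<Rightarrow> bool" where
  "category C \<longleftrightarrow>
     (\<forall>f \<in> cAr C. cDom C f \<in> cOb C \<and> cCod C f \<in> cOb C) \<and>
     (\<forall>a \<in> cOb C. cId C a \<in> hom C a a) \<and>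
     (\<forall>a b c f g. f \<in> hom C a b \<longrightarrow> g \<in> hom C b c \<longrightarrow> cComp C g f \<in> hom C a c) \<and>
     (\<forall>a b f. f \<in> hom C a b \<longrightarrow> cComp C f (cId C a) = f \<and> cComp C (cId C b) f = f) \<and>
     (\<forall>a b c d f g h. f \<in> hom C a b \<longrightarrow> g \<in> hom C b c \<longrightarrow> h \<in> hom C c d \<longrightarrow>
        cComp C h (cComp C g f) = cComp C (cComp C h g) f)"

text \<open>P with p : P \<rightarrow> dom f, q : P \<rightarrow> dom g is a pullback of the cospan f, g;
  q is the pullback of f along g.\<close>
definition is_pullback :: "('o, 'm) cat \<Rightarrow> 'm \<Rightarrow> 'm \<Rightarrow> 'o \<Rightarrow> 'm \<Rightarrow> 'm \<Rightarrow> bool" where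
  "is_pullback C f g P p q \<longleftrightarrow>
     f \<in> cAr C \<and> g \<in> cAr C \<and> cCod C f = cCod C g \<and>
     P \<in> cOb C \<and> p \<in> hom C P (cDom C f) \<and> q \<in> hom C P (cDom C g) \<and>
     cComp C f p = cComp C g q \<and>
     (\<forall>U p' q'. U \<in> cOb C \<longrightarrow> p' \<in> hom C U (cDom C f) \<longrightarrow> q' \<in> hom C U (cDom C g) \<longrightarrow>
        cComp C f p' = cComp C g q' \<longrightarrow>
        (\<exists>!u. u \<in> hom C U P \<and> cComp C p u = p' \<and> cComp C q u = q'))"

definition is_terminal :: "('o, 'm) cat \<Rightarrow> 'o \<Rightarrow> bool" where
  "is_terminal C t \<longleftrightarrow> t \<in> cOb C \<and> (\<forall>a \<in> cOb C. \<exists>!f. f \<in> hom C a t)"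

text \<open>Finite limits: terminal object and all pullbacks (standard equivalent).\<close>
definition has_finite_limits :: "('o, 'm) cat \<Rightarrow> bool" where
  "has_finite_limits C \<longleftrightarrow>
     (\<exists>t. is_terminal C t) \<and>
     (\<forall>f g. f \<in> cAr C \<longrightarrow> g \<in> cAr C \<longrightarrow> cCod C f = cCod C g \<longrightarrow>
        (\<exists>P p q. is_pullback C f g P p q))"

definition descent_category :: "('o, 'm) cat \<Rightarrow> 'm set \<Rightarrow> bool" where
  "descent_category C Cov \<longleftrightarrow>
     category C \<and> has_finite_limits C \<and>
     Cov \<subseteq> cAr C \<and>
     (\<forall>a \<in> cOb C. cId C a \<in> Cov) \<and>
     (\<forall>f g. f \<in> Cov \<longrightarrow> g \<in> Cov \<longrightarrow> cDom C g = cCod C f \<longrightarrow> cComp C g f \<in> Cov) \<and>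
     (\<forall>f g P p q. f \<in> Cov \<longrightarrow> is_pullback C f g P p q \<longrightarrow> q \<in> Cov) \<and>
     (\<forall>f g. f \<in> cAr C \<longrightarrow> g \<in> cAr C \<longrightarrow> cDom C g = cCod C f \<longrightarrow>
        f \<in> Cov \<longrightarrow> cComp C g f \<in> Cov \<longrightarrow> g \<in> Cov)"

text \<open>A morphism [k] \<rightarrow> [n] of \<Delta> is the list of its values (a weakly monotone list of
  length k+1 with entries \<le> n).\<close>
definition delta :: "nat \<Rightarrow> nat \<Rightarrow> nat list \<Rightarrow> bool" where
  "delta k n \<alpha> \<longleftrightarrow> length \<alpha> = Suc k \<and> sorted \<alpha> \<and> (\<forall>i \<in> set \<alpha>. i \<le> n)"

definition delta_comp :: "nat list \<Rightarrow> nat list \<Rightarrow> nat list" where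
  "delta_comp \<theta> \<phi> = map (\<lambda>i. \<theta> ! i) \<phi>"   (* \<theta> \<circ> \<phi> *)

definition delta_id :: "nat \<Rightarrow> nat list" where
  "delta_id m = [0..<Suc m]"

record ('o, 'm) sobj =
  sob  :: "nat \<Rightarrow> 'o"
  sact :: "nat \<Rightarrow> nat \<Rightarrow> nat list \<Rightarrow> 'm"   (* sact X k n \<theta> : X_n \<rightarrow> X_k for \<theta> : [k] \<rightarrow> [n] *)

definition simplicial_object :: "('o, 'm) cat \<Rightarrow> ('o, 'm) sobj \<Rightarrow> bool" where
  "simplicial_object C X \<longleftrightarrow>
     (\<forall>n. sob X n \<in> cOb C) \<and>
     (\<forall>k n \<theta>. delta k n \<theta> \<longrightarrow> sact X k n \<theta> \<in> hom C (sob X n) (sob X k)) \<and>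
     (\<forall>m. sact X m m (delta_id m) = cId C (sob X m)) \<and>
     (\<forall>k m n \<phi> \<theta>. delta k m \<phi> \<longrightarrow> delta m n \<theta> \<longrightarrow>
        sact X k n (delta_comp \<theta> \<phi>) = cComp C (sact X k m \<phi>) (sact X m n \<theta>))"

definition smor :: "('o, 'm) cat \<Rightarrow> ('o, 'm) sobj \<Rightarrow> ('o, 'm) sobj \<Rightarrow> (nat \<Rightarrow> 'm) \<Rightarrow> bool" where
  "smor C X Y f \<longleftrightarrow>
     (\<forall>n. f n \<in> hom C (sob X n) (sob Y n)) \<and>
     (\<forall>k n \<theta>. delta k n \<theta> \<longrightarrow>
        cComp C (f k) (sact X k n \<theta>) = cComp C (sact Y k n \<theta>) (f n))"

definition smor_comp :: "('o, 'm) cat \<Rightarrow> (nat \<Rightarrow> 'm) \<Rightarrow> (nat \<Rightarrow> 'm) \<Rightarrow> (nat \<Rightarrow> 'm)" where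
  "smor_comp C g f = (\<lambda>n. cComp C (g n) (f n))"

text \<open>A simplicial set is given by carriers T k and actions Ta j k \<phi> : T_k \<rightarrow> T_j.
  smap_into C X U T Ta h means: h is a simplicial map from T to the simplicial set
  Hom(U, X_\<bullet>).\<close>
definition smap_into :: "('o, 'm) cat \<Rightarrow> ('o, 'm) sobj \<Rightarrow> 'o \<Rightarrow> (nat \<Rightarrow> 'a set)
    \<Rightarrow> (nat \<Rightarrow> nat \<Rightarrow> nat list \<Rightarrow> 'a \<Rightarrow> 'a) \<Rightarrow> (nat \<Rightarrow> 'a \<Rightarrow> 'm) \<Rightarrow> bool" where
  "smap_into C X U T Ta h \<longleftrightarrow>
     (\<forall>k x. x \<in> T k \<longrightarrow> h k x \<in> hom C U (sob X k)) \<and>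
     (\<forall>j k \<phi> x. delta j k \<phi> \<longrightarrow> x \<in> T k \<longrightarrow>
        h j (Ta j k \<phi> x) = cComp C (sact X j k \<phi>) (h k x))"

text \<open>M (with universal pair a, b) is Map(S \<hookrightarrow> T, f) = Map(S,X) \<times>_{Map(S,Y)} Map(T,Y):
  it represents compatible pairs (simplicial map S \<rightarrow> Hom(U,X), simplicial map T \<rightarrow> Hom(U,Y)).
  S is a simplicial subset of T (same action).\<close>
definition is_Map_rel :: "('o, 'm) cat \<Rightarrow> ('o, 'm) sobj \<Rightarrow> ('o, 'm) sobj \<Rightarrow> (nat \<Rightarrow> 'm)
    \<Rightarrow> (nat \<Rightarrow> 'a set) \<Rightarrow> (nat \<Rightarrow> 'a set) \<Rightarrow> (nat \<Rightarrow> nat \<Rightarrow> nat list \<Rightarrow> 'a \<Rightarrow> 'a)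
    \<Rightarrow> 'o \<Rightarrow> (nat \<Rightarrow> 'a \<Rightarrow> 'm) \<Rightarrow> (nat \<Rightarrow> 'a \<Rightarrow> 'm) \<Rightarrow> bool" where
  "is_Map_rel C X Y f S T Ta M a b \<longleftrightarrow>
     M \<in> cOb C \<and> smap_into C X M S Ta a \<and> smap_into C Y M T Ta b \<and>
     (\<forall>k x. x \<in> S k \<longrightarrow> cComp C (f k) (a k x) = b k x) \<and>
     (\<forall>U a' b'. U \<in> cOb C \<longrightarrow> smap_into C X U S Ta a' \<longrightarrow> smap_into C Y U T Ta b' \<longrightarrow>
        (\<forall>k x. x \<in> S k \<longrightarrow> cComp C (f k) (a' k x) = b' k x) \<longrightarrow>
        (\<exists>!u. u \<in> hom C U M \<and>
              (\<forall>k x. x \<in> S k \<longrightarrow> a' k x = cComp C (a k x) u) \<and>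
              (\<forall>k x. x \<in> T k \<longrightarrow> b' k x = cComp C (b k x) u)))"

definition std_simplex :: "nat \<Rightarrow> nat \<Rightarrow> nat list set" where
  "std_simplex n k = {\<alpha>. delta k n \<alpha>}"

definition bdry_simplex :: "nat \<Rightarrow> nat \<Rightarrow> nat list set" where
  "bdry_simplex n k = {\<alpha>. delta k n \<alpha> \<and> set \<alpha> \<noteq> {0..n}}"

definition simplex_act :: "nat \<Rightarrow> nat \<Rightarrow> nat list \<Rightarrow> nat list \<Rightarrow> nat list" where
  "simplex_act j k \<phi> \<alpha> = delta_comp \<alpha> \<phi>"

text \<open>f is a hypercover: for every n, the canonical map X_n \<rightarrow> Map(\<partial>\<Delta>^n \<hookrightarrow> \<Delta>^n, f)
  (induced by the n-simplex id of X_n and f_n) is a cover.\<close>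
definition hypercover :: "('o, 'm) cat \<Rightarrow> 'm set \<Rightarrow> ('o, 'm) sobj \<Rightarrow> ('o, 'm) sobj
    \<Rightarrow> (nat \<Rightarrow> 'm) \<Rightarrow> bool" where
  "hypercover C Cov X Y f \<longleftrightarrow>
     (\<forall>n M a b u.
        is_Map_rel C X Y f (bdry_simplex n) (std_simplex n) simplex_act M a b \<longrightarrow>
        u \<in> hom C (sob X n) M \<longrightarrow>
        (\<forall>k \<alpha>. \<alpha> \<in> bdry_simplex n k \<longrightarrow> sact X k n \<alpha> = cComp C (a k \<alpha>) u) \<longrightarrow>
        (\<forall>k \<alpha>. \<alpha> \<in> std_simplex n k \<longrightarrow>
            cComp C (sact Y k n \<alpha>) (f n) = cComp C (b k \<alpha>) u) \<longrightarrow>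
        u \<in> Cov)"

end

theory Submission
  imports Defs
begin

definition S :: "nat set set \<Rightarrow> nat \<Rightarrow> nat list set" where
  "S F k = {\<alpha>. length \<alpha> = Suc k \<and> sorted \<alpha> \<and> set \<alpha> \<in> F}"

definition dc :: "nat set set \<Rightarrow> bool" where
  "dc F \<longleftrightarrow> finite F \<and> (\<forall>A\<in>F. A \<noteq> {} \<and> finite A) \<and> (\<forall>A\<in>F. \<forall>B. B \<subseteq> A \<longrightarrow> B \<noteq> {} \<longrightarrow> B \<in> F)"

definition Pw :: "nat set \<Rightarrow> nat set set" where "Pw \<sigma> = {A. A \<noteq> {} \<and> A \<subseteq> \<sigma>}"
definition bd :: "nat set \<Rightarrow> nat set set" where "bd \<sigma> = {A. A \<noteq> {} \<and> A \<subseteq> \<sigma> \<and> A \<noteq> \<sigma>}"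

lemma delta_comp_len[simp]: "length (delta_comp \<alpha> \<phi>) = length \<phi>"
  by (simp add: delta_comp_def)

lemma set_delta_comp: "set \<phi> \<subseteq> {..<length \<alpha>} \<Longrightarrow> set (delta_comp \<alpha> \<phi>) \<subseteq> set \<alpha>"
  by (auto simp: delta_comp_def)

lemma sorted_delta_comp: "sorted \<alpha> \<Longrightarrow> sorted \<phi> \<Longrightarrow> set \<phi> \<subseteq> {..<length \<alpha>} \<Longrightarrow> sorted (delta_comp \<alpha> \<phi>)"
  unfolding delta_comp_def sorted_iff_nth_mono
  by (auto intro!: sorted_nth_mono simp: subset_iff)

lemma delta_set: "delta j k \<phi> \<Longrightarrow> set \<phi> \<subseteq> {..<Suc k}"
  by (auto simp: delta_def)

lemma S_act: assumes "dc F" "\<alpha> \<in> S F k" "delta j k \<phi>"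
  shows "simplex_act j k \<phi> \<alpha> \<in> S F j"
proof -
  have L: "length \<alpha> = Suc k" "sorted \<alpha>" "set \<alpha> \<in> F" using assms(2) by (auto simp: S_def)
  have p: "set \<phi> \<subseteq> {..<length \<alpha>}" using delta_set[OF assms(3)] L by simp
  have s: "set (delta_comp \<alpha> \<phi>) \<subseteq> set \<alpha>" by (rule set_delta_comp[OF p])
  have "length (delta_comp \<alpha> \<phi>) = Suc j" using assms(3) by (simp add: delta_def)
  then have ne: "set (delta_comp \<alpha> \<phi>) \<noteq> {}" by (metis Zero_not_Suc length_0_conv set_empty)
  show ?thesis using assms(1,3) L s ne sorted_delta_comp[OF L(2) _ p]
    unfolding S_def simplex_act_def dc_def delta_def by auto
qed

lemma map_delta_comp: "set \<phi> \<subseteq> {..<length \<alpha>} \<Longrightarrow> map g (delta_comp \<alpha> \<phi>) = delta_comp (map g \<alpha>) \<phi>"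
  by (auto simp: delta_comp_def subset_iff)

lemma delta_comp_assoc: "set \<phi> \<subseteq> {..<length \<beta>} \<Longrightarrow> delta_comp \<alpha> (delta_comp \<beta> \<phi>) = delta_comp (delta_comp \<alpha> \<beta>) \<phi>"
  by (auto simp: delta_comp_def subset_iff)

lemma delta_comp_id: "set \<alpha> \<subseteq> {..<Suc n} \<Longrightarrow> delta_comp (delta_id n) \<alpha> = \<alpha>"
  by (auto simp: delta_comp_def delta_id_def subset_iff nth_upt intro!: map_idI simp del: upt_Suc)

lemma delta_comp_idr: "length \<alpha> = Suc n \<Longrightarrow> delta_comp \<alpha> (delta_id n) = \<alpha>"
  by (auto simp: delta_comp_def delta_id_def intro!: nth_equalityI simp del: upt_Suc)

lemma delta_S: "delta k n \<alpha> \<longleftrightarrow> \<alpha> \<in> S (Pw {0..n}) k"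
  by (auto simp: delta_def S_def Pw_def)

lemma std_S: "std_simplex n = S (Pw {0..n})"
  by (auto simp: std_simplex_def delta_S)

lemma bdry_S: "bdry_simplex n = S (bd {0..n})"
  by (auto simp: bdry_simplex_def delta_def S_def bd_def fun_eq_iff)

lemma dc_Pw: "finite \<sigma> \<Longrightarrow> dc (Pw \<sigma>)"
  by (auto simp: dc_def Pw_def intro: finite_subset)
lemma dc_bd: "finite \<sigma> \<Longrightarrow> dc (bd \<sigma>)"
  by (auto simp: dc_def bd_def intro: finite_subset)

lemma S_mono: "F \<subseteq> G \<Longrightarrow> S F k \<subseteq> S G k"
  by (auto simp: S_def)

lemma S_empty[simp]: "S {} k = {}" by (simp add: S_def)

lemma S_ne: "\<alpha> \<in> S F k \<Longrightarrow> set \<alpha> \<noteq> {}" by (auto simp: S_def)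

section \<open>Relabelling\<close>

definition iota :: "nat set \<Rightarrow> nat list" where "iota \<sigma> = sorted_list_of_set \<sigma>"
definition ix :: "nat set \<Rightarrow> nat \<Rightarrow> nat" where
  "ix \<sigma> a = the_inv_into {..<card \<sigma>} (\<lambda>i. iota \<sigma> ! i) a"

definition rl :: "nat set \<Rightarrow> nat list \<Rightarrow> nat list" where "rl \<sigma> \<alpha> = map (ix \<sigma>) \<alpha>"
definition il :: "nat set \<Rightarrow> nat list \<Rightarrow> nat list" where "il \<sigma> \<gamma> = map (\<lambda>i. iota \<sigma> ! i) \<gamma>"

context fixes \<sigma> :: "nat set" assumes fin: "finite \<sigma>"
begin

lemma iota_len: "length (iota \<sigma>) = card \<sigma>" using fin by (simp add: iota_def)
lemma iota_set: "set (iota \<sigma>) = \<sigma>" using fin by (simp add: iota_def)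
lemma iota_sorted: "sorted (iota \<sigma>)" by (simp add: iota_def)
lemma iota_distinct: "distinct (iota \<sigma>)" by (simp add: iota_def)

lemma iota_bij: "bij_betw (\<lambda>i. iota \<sigma> ! i) {..<card \<sigma>} \<sigma>"
  using iota_len iota_set iota_distinct
  by (metis bij_betw_nth lessThan_atLeast0)

lemma ix_mem: "a \<in> \<sigma> \<Longrightarrow> ix \<sigma> a < card \<sigma>"
  unfolding ix_def using iota_bij bij_betw_the_inv_into bij_betw_apply by fastforce

lemma iota_ix: "a \<in> \<sigma> \<Longrightarrow> iota \<sigma> ! ix \<sigma> a = a"
  unfolding ix_def using iota_bij
  by (metis bij_betw_def f_the_inv_into_f)

lemma ix_iota: "i < card \<sigma> \<Longrightarrow> ix \<sigma> (iota \<sigma> ! i) = i"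
  unfolding ix_def using iota_bij
  by (metis bij_betw_def lessThan_iff the_inv_into_f_f)

lemma iota_mono: "i \<le> j \<Longrightarrow> j < card \<sigma> \<Longrightarrow> iota \<sigma> ! i \<le> iota \<sigma> ! j"
  using iota_sorted iota_len by (simp add: sorted_nth_mono)

lemma iota_strict: assumes "i < j" "j < card \<sigma>" shows "iota \<sigma> ! i < iota \<sigma> ! j"
proof -
  have "sorted_wrt (<) (iota \<sigma>)" by (simp add: iota_def)
  then show ?thesis using iota_len assms by (simp add: sorted_wrt_iff_nth_less)
qed

lemma ix_mono: assumes "a \<le> b" "a \<in> \<sigma>" "b \<in> \<sigma>" shows "ix \<sigma> a \<le> ix \<sigma> b"
proof (rule ccontr)
  assume "\<not> ?thesis"
  then have "ix \<sigma> b < ix \<sigma> a" by simp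
  from iota_strict[OF this ix_mem[OF assms(2)]] show False
    using iota_ix assms by simp
qed

lemma ix_image: "A \<subseteq> \<sigma> \<Longrightarrow> ix \<sigma> ` A = {..<card \<sigma>} \<longleftrightarrow> A = \<sigma>"
proof
  assume A: "A \<subseteq> \<sigma>" and e: "ix \<sigma> ` A = {..<card \<sigma>}"
  show "A = \<sigma>"
  proof
    show "\<sigma> \<subseteq> A"
    proof
      fix a assume a: "a \<in> \<sigma>"
      then have "ix \<sigma> a \<in> ix \<sigma> ` A" using e ix_mem by auto
      then obtain b where b: "b \<in> A" "ix \<sigma> b = ix \<sigma> a" by auto
      then show "a \<in> A" using A a iota_ix by (metis subsetD)
    qed
  qed (rule A)
next
  assume "A = \<sigma>"
  then show "ix \<sigma> ` A = {..<card \<sigma>}"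
  proof -
    have "bij_betw (ix \<sigma>) \<sigma> {..<card \<sigma>}"
      unfolding ix_def by (rule bij_betw_the_inv_into[OF iota_bij])
    then show ?thesis using \<open>A = \<sigma>\<close> by (simp add: bij_betw_def)
  qed
qed

lemma rl_il: "set \<gamma> \<subseteq> {..<card \<sigma>} \<Longrightarrow> rl \<sigma> (il \<sigma> \<gamma>) = \<gamma>"
  by (auto simp: rl_def il_def ix_iota subset_iff intro!: map_idI)

lemma il_rl: "set \<alpha> \<subseteq> \<sigma> \<Longrightarrow> il \<sigma> (rl \<sigma> \<alpha>) = \<alpha>"
  by (auto simp: rl_def il_def iota_ix subset_iff intro!: map_idI)

lemma rl_S: assumes "\<alpha> \<in> S (Pw \<sigma>) k" shows "rl \<sigma> \<alpha> \<in> S (Pw {0..card \<sigma> - 1}) k"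
    and "set (rl \<sigma> \<alpha>) = {0..card \<sigma> - 1} \<longleftrightarrow> set \<alpha> = \<sigma>"
proof -
  have a: "length \<alpha> = Suc k" "sorted \<alpha>" "set \<alpha> \<subseteq> \<sigma>" "set \<alpha> \<noteq> {}"
    using assms by (auto simp: S_def Pw_def)
  have ne: "\<sigma> \<noteq> {}" using a by auto
  then have c: "card \<sigma> > 0" using fin by auto
  have e: "{0..card \<sigma> - 1} = {..<card \<sigma>}" using c by auto
  have sr: "sorted (rl \<sigma> \<alpha>)" using a unfolding rl_def sorted_iff_nth_mono
    by (auto intro!: ix_mono simp: subset_iff)
  have st: "set (rl \<sigma> \<alpha>) = ix \<sigma> ` set \<alpha>" by (simp add: rl_def)
  have sub: "set (rl \<sigma> \<alpha>) \<subseteq> {..<card \<sigma>}" using a ix_mem by (auto simp: rl_def)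
  show "rl \<sigma> \<alpha> \<in> S (Pw {0..card \<sigma> - 1}) k"
    using a sr sub e by (auto simp: S_def Pw_def rl_def)
  show "set (rl \<sigma> \<alpha>) = {0..card \<sigma> - 1} \<longleftrightarrow> set \<alpha> = \<sigma>"
    using st e ix_image a(3) by simp
qed

lemma il_S: assumes "\<gamma> \<in> S (Pw {0..card \<sigma> - 1}) k" "\<sigma> \<noteq> {}"
  shows "il \<sigma> \<gamma> \<in> S (Pw \<sigma>) k"
proof -
  have c: "card \<sigma> > 0" using fin assms(2) by auto
  have g: "length \<gamma> = Suc k" "sorted \<gamma>" "set \<gamma> \<subseteq> {..<card \<sigma>}" "set \<gamma> \<noteq> {}"
    using assms c by (auto simp: S_def Pw_def)
  have sr: "sorted (il \<sigma> \<gamma>)" using g unfolding il_def sorted_iff_nth_mono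
    by (auto intro!: iota_mono simp: subset_iff)
  have "set (il \<sigma> \<gamma>) \<subseteq> \<sigma>" using g iota_set iota_len by (auto simp: il_def subset_iff)
  then show ?thesis using g sr by (auto simp: S_def Pw_def il_def)
qed

lemma S_bd_Pw: "\<alpha> \<in> S (bd \<sigma>) k \<longleftrightarrow> \<alpha> \<in> S (Pw \<sigma>) k \<and> set \<alpha> \<noteq> \<sigma>"
  by (auto simp: S_def bd_def Pw_def)

end

lemma rl_id: "set \<alpha> \<subseteq> {0..n} \<Longrightarrow> rl {0..n} \<alpha> = \<alpha>"
proof -
  assume a: "set \<alpha> \<subseteq> {0..n}"
  have i: "iota {0..n} = [0..<Suc n]" by (simp add: iota_def atLeastLessThanSuc_atLeastAtMost[symmetric] del: upt_Suc)
  have "ix {0..n} a = a" if "a \<le> n" for a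
  proof -
    have "iota {0..n} ! a = a" using i that by (simp del: upt_Suc)
    then show ?thesis using ix_iota[of "{0..n}" a] that by simp
  qed
  then show ?thesis using a by (auto simp: rl_def subset_iff intro!: map_idI)
qed



definition isMap :: "('o,'m) cat \<Rightarrow> ('o,'m) sobj \<Rightarrow> nat set set \<Rightarrow> 'o \<Rightarrow> (nat \<Rightarrow> nat list \<Rightarrow> 'm) \<Rightarrow> bool" where
 "isMap C X F M e \<longleftrightarrow> M \<in> cOb C \<and> smap_into C X M (S F) simplex_act e \<and>
   (\<forall>U d. U \<in> cOb C \<longrightarrow> smap_into C X U (S F) simplex_act d \<longrightarrow>
      (\<exists>!u. u \<in> hom C U M \<and> (\<forall>k \<alpha>. \<alpha> \<in> S F k \<longrightarrow> d k \<alpha> = cComp C (e k \<alpha>) u)))"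

lemma ex1_eq: "\<exists>!x. P x \<Longrightarrow> P a \<Longrightarrow> P b \<Longrightarrow> a = b" by blast

locale dcat =
  fixes C :: "('o,'m) cat" and Cov :: "'m set"
  assumes desc: "descent_category C Cov"
begin

abbreviation comp (infixr "\<cdot>" 55) where "g \<cdot> f \<equiv> cComp C g f"

lemma cat: "category C" using desc[unfolded descent_category_def] by (elim conjE) assumption
lemma fl: "has_finite_limits C" using desc[unfolded descent_category_def] by (elim conjE) assumption

lemma comp_hom: "f \<in> hom C a b \<Longrightarrow> g \<in> hom C b c \<Longrightarrow> g \<cdot> f \<in> hom C a c"
  using cat unfolding category_def by blast
lemma assoc: "f \<in> hom C a b \<Longrightarrow> g \<in> hom C b c \<Longrightarrow> h \<in> hom C c d \<Longrightarrow> (h \<cdot> g) \<cdot> f = h \<cdot> g \<cdot> f"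
proof -
  have "\<forall>a b c d f g h. f \<in> hom C a b \<longrightarrow> g \<in> hom C b c \<longrightarrow> h \<in> hom C c d \<longrightarrow>
        cComp C h (cComp C g f) = cComp C (cComp C h g) f" using cat by (simp add: category_def)
  then show "f \<in> hom C a b \<Longrightarrow> g \<in> hom C b c \<Longrightarrow> h \<in> hom C c d \<Longrightarrow> (h \<cdot> g) \<cdot> f = h \<cdot> g \<cdot> f" by metis
qed
lemma id_hom: "a \<in> cOb C \<Longrightarrow> cId C a \<in> hom C a a"
  using cat unfolding category_def by blast
lemma idr: "f \<in> hom C a b \<Longrightarrow> f \<cdot> cId C a = f"
  using cat unfolding category_def by blast
lemma idl: "f \<in> hom C a b \<Longrightarrow> cId C b \<cdot> f = f"
  using cat unfolding category_def by blast
lemma hom_ob: "f \<in> hom C a b \<Longrightarrow> a \<in> cOb C \<and> b \<in> cOb C"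
  using cat unfolding category_def hom_def by blast

lemma arr_comp[simp]: "f \<in> cAr C \<Longrightarrow> g \<in> cAr C \<Longrightarrow> cDom C g = cCod C f \<Longrightarrow> g \<cdot> f \<in> cAr C"
  using comp_hom[of f "cDom C f" "cCod C f" g "cCod C g"] by (simp add: hom_def)
lemma dom_comp[simp]: "f \<in> cAr C \<Longrightarrow> g \<in> cAr C \<Longrightarrow> cDom C g = cCod C f \<Longrightarrow> cDom C (g \<cdot> f) = cDom C f"
  using comp_hom[of f "cDom C f" "cCod C f" g "cCod C g"] by (simp add: hom_def)
lemma cod_comp[simp]: "f \<in> cAr C \<Longrightarrow> g \<in> cAr C \<Longrightarrow> cDom C g = cCod C f \<Longrightarrow> cCod C (g \<cdot> f) = cCod C g"
  using comp_hom[of f "cDom C f" "cCod C f" g "cCod C g"] by (simp add: hom_def)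
lemma assoc'[simp]: "f \<in> cAr C \<Longrightarrow> g \<in> cAr C \<Longrightarrow> h \<in> cAr C \<Longrightarrow> cDom C g = cCod C f \<Longrightarrow> cDom C h = cCod C g \<Longrightarrow> (h \<cdot> g) \<cdot> f = h \<cdot> g \<cdot> f"
  using assoc[of f "cDom C f" "cCod C f" g "cCod C g" h "cCod C h"] by (simp add: hom_def)

lemma cov_ar: "Cov \<subseteq> cAr C" using desc[unfolded descent_category_def] by (elim conjE) assumption
lemma id_cov: "a \<in> cOb C \<Longrightarrow> cId C a \<in> Cov"
proof -
  have "\<forall>a \<in> cOb C. cId C a \<in> Cov" using desc[unfolded descent_category_def] by (elim conjE) assumption
  then show "a \<in> cOb C \<Longrightarrow> cId C a \<in> Cov" by blast
qed
lemma comp_cov: "f \<in> Cov \<Longrightarrow> g \<in> Cov \<Longrightarrow> cDom C g = cCod C f \<Longrightarrow> g \<cdot> f \<in> Cov"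
proof -
  have "\<forall>f g. f \<in> Cov \<longrightarrow> g \<in> Cov \<longrightarrow> cDom C g = cCod C f \<longrightarrow> cComp C g f \<in> Cov"
    using desc[unfolded descent_category_def] by (elim conjE) assumption
  then show "f \<in> Cov \<Longrightarrow> g \<in> Cov \<Longrightarrow> cDom C g = cCod C f \<Longrightarrow> g \<cdot> f \<in> Cov" by blast
qed
lemma pb_cov: "f \<in> Cov \<Longrightarrow> is_pullback C f g P p q \<Longrightarrow> q \<in> Cov"
proof -
  have "\<forall>f g P p q. f \<in> Cov \<longrightarrow> is_pullback C f g P p q \<longrightarrow> q \<in> Cov"
    using desc[unfolded descent_category_def] by (elim conjE) assumption
  then show "f \<in> Cov \<Longrightarrow> is_pullback C f g P p q \<Longrightarrow> q \<in> Cov" by blast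
qed
lemma cancel_cov: "f \<in> cAr C \<Longrightarrow> g \<in> cAr C \<Longrightarrow> cDom C g = cCod C f \<Longrightarrow> f \<in> Cov \<Longrightarrow> g \<cdot> f \<in> Cov \<Longrightarrow> g \<in> Cov"
proof -
  have "\<forall>f g. f \<in> cAr C \<longrightarrow> g \<in> cAr C \<longrightarrow> cDom C g = cCod C f \<longrightarrow>
        f \<in> Cov \<longrightarrow> cComp C g f \<in> Cov \<longrightarrow> g \<in> Cov"
    using desc[unfolded descent_category_def] by (elim conjE) assumption
  then show "f \<in> cAr C \<Longrightarrow> g \<in> cAr C \<Longrightarrow> cDom C g = cCod C f \<Longrightarrow> f \<in> Cov \<Longrightarrow> g \<cdot> f \<in> Cov \<Longrightarrow> g \<in> Cov" by blast
qed

lemma pb_hom: "is_pullback C f g P p q \<Longrightarrow> P \<in> cOb C \<and> p \<in> hom C P (cDom C f) \<and> q \<in> hom C P (cDom C g) \<and> f \<cdot> p = g \<cdot> q"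
  by (simp add: is_pullback_def)

lemma pb_univ: assumes "is_pullback C f g P p q" "U \<in> cOb C" "p' \<in> hom C U (cDom C f)" "q' \<in> hom C U (cDom C g)" "f \<cdot> p' = g \<cdot> q'"
  shows "\<exists>!u. u \<in> hom C U P \<and> p \<cdot> u = p' \<and> q \<cdot> u = q'"
proof -
  have "\<forall>U p' q'. U \<in> cOb C \<longrightarrow> p' \<in> hom C U (cDom C f) \<longrightarrow> q' \<in> hom C U (cDom C g) \<longrightarrow>
        cComp C f p' = cComp C g q' \<longrightarrow>
        (\<exists>!u. u \<in> hom C U P \<and> cComp C p u = p' \<and> cComp C q u = q')"
    using assms(1) unfolding is_pullback_def by (elim conjE) assumption
  then show ?thesis using assms(2-5) by blast
qed

lemma pb_ex: assumes "is_pullback C f g P p q" "p' \<in> hom C U (cDom C f)" "q' \<in> hom C U (cDom C g)"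
   "f \<cdot> p' = g \<cdot> q'" shows "\<exists>u. u \<in> hom C U P \<and> p \<cdot> u = p' \<and> q \<cdot> u = q'"
proof -
  have "U \<in> cOb C" using hom_ob assms by blast
  from pb_univ[OF assms(1) this assms(2-4)] show ?thesis by blast
qed

lemma pb_uniq: assumes "is_pullback C f g P p q" "u \<in> hom C U P" "u' \<in> hom C U P"
   "p \<cdot> u = p \<cdot> u'" "q \<cdot> u = q \<cdot> u'" shows "u = u'"
proof -
  have U: "U \<in> cOb C" using assms(2) hom_ob by blast
  have h: "p \<in> hom C P (cDom C f)" "q \<in> hom C P (cDom C g)" "f \<cdot> p = g \<cdot> q" using assms(1) by (auto simp: is_pullback_def)
  have "p \<cdot> u \<in> hom C U (cDom C f)" "q \<cdot> u \<in> hom C U (cDom C g)" using h assms(2) comp_hom by auto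
  moreover have "f \<cdot> (p \<cdot> u) = g \<cdot> (q \<cdot> u)"
  proof -
    have fa: "f \<in> hom C (cDom C f) (cCod C f)" "g \<in> hom C (cDom C g) (cCod C g)"
      using assms(1) by (auto simp: is_pullback_def hom_def)
    show ?thesis using assoc[OF assms(2) h(1) fa(1)] assoc[OF assms(2) h(2) fa(2)] h(3) by simp
  qed
  ultimately have "\<exists>!v. v \<in> hom C U P \<and> p \<cdot> v = p \<cdot> u \<and> q \<cdot> v = q \<cdot> u"
    by (rule pb_univ[OF assms(1) U])
  then show ?thesis by (rule ex1_eq) (use assms(2-5) in simp)+
qed

lemma pb_exists: "f \<in> cAr C \<Longrightarrow> g \<in> cAr C \<Longrightarrow> cCod C f = cCod C g \<Longrightarrow> \<exists>P p q. is_pullback C f g P p q"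
  using fl unfolding has_finite_limits_def by blast

lemma iso_cov: assumes "i \<in> hom C A B" "j \<in> hom C B A" "j \<cdot> i = cId C A" "i \<cdot> j = cId C B"
  shows "i \<in> Cov"
proof -
  have B: "B \<in> cOb C" "A \<in> cOb C" using assms hom_ob by auto
  have "is_pullback C (cId C B) (cId C B) A i i"
    unfolding is_pullback_def
  proof (intro conjI allI impI)
    show "cId C B \<in> cAr C" using id_hom B by (simp add: hom_def)
    show "cId C B \<cdot> i = cId C B \<cdot> i" by simp
    fix U p' q' assume U: "U \<in> cOb C" and p': "p' \<in> hom C U (cDom C (cId C B))"
      and q': "q' \<in> hom C U (cDom C (cId C B))" and e: "cId C B \<cdot> p' = cId C B \<cdot> q'"
    have p'': "p' \<in> hom C U B" "q' \<in> hom C U B" using p' q' id_hom B by (auto simp: hom_def)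
    have pq: "p' = q'" using e idl p'' by metis
    show "\<exists>!u. u \<in> hom C U A \<and> i \<cdot> u = p' \<and> i \<cdot> u = q'"
    proof
      show "j \<cdot> p' \<in> hom C U A \<and> i \<cdot> j \<cdot> p' = p' \<and> i \<cdot> j \<cdot> p' = q'"
        using comp_hom[OF p''(1) assms(2)] assoc[OF p''(1) assms(2) assms(1)] assms(4) idl[OF p''(1)] pq by simp
      fix u assume u: "u \<in> hom C U A \<and> i \<cdot> u = p' \<and> i \<cdot> u = q'"
      then show "u = j \<cdot> p'" using assoc[OF conjunct1[OF u] assms(1) assms(2)] assms(3) idl[OF conjunct1[OF u]] by simp
    qed
  qed (use assms B id_hom in \<open>auto simp: hom_def\<close>)
  then show ?thesis using pb_cov id_cov B by blast
qed

section \<open>Simplicial objects\<close>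

lemma sob_ob: "simplicial_object C X \<Longrightarrow> sob X n \<in> cOb C"
  unfolding simplicial_object_def by blast
lemma sact_hom: "simplicial_object C X \<Longrightarrow> delta k n \<theta> \<Longrightarrow> sact X k n \<theta> \<in> hom C (sob X n) (sob X k)"
  unfolding simplicial_object_def by blast
lemma sact_comp: "simplicial_object C X \<Longrightarrow> delta k m \<phi> \<Longrightarrow> delta m n \<theta> \<Longrightarrow>
   sact X k n (delta_comp \<theta> \<phi>) = sact X k m \<phi> \<cdot> sact X m n \<theta>"
  unfolding simplicial_object_def by blast
lemma sact_id: "simplicial_object C X \<Longrightarrow> sact X m m (delta_id m) = cId C (sob X m)"
  unfolding simplicial_object_def by blast

lemma smor_hom: "smor C X Y f \<Longrightarrow> f n \<in> hom C (sob X n) (sob Y n)"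
  unfolding smor_def by blast
lemma smor_nat: "smor C X Y f \<Longrightarrow> delta k n \<theta> \<Longrightarrow> f k \<cdot> sact X k n \<theta> = sact Y k n \<theta> \<cdot> f n"
  unfolding smor_def by blast

lemma smap_hom: "smap_into C X U T Ta h \<Longrightarrow> x \<in> T k \<Longrightarrow> h k x \<in> hom C U (sob X k)"
  unfolding smap_into_def by blast
lemma smap_act: "smap_into C X U T Ta h \<Longrightarrow> delta j k \<phi> \<Longrightarrow> x \<in> T k \<Longrightarrow> h j (Ta j k \<phi> x) = sact X j k \<phi> \<cdot> h k x"
  unfolding smap_into_def by blast

lemma smap_comp_r: assumes "simplicial_object C X" "smap_into C X M T Ta e" "u \<in> hom C U M"
  shows "smap_into C X U T Ta (\<lambda>k x. e k x \<cdot> u)"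
  unfolding smap_into_def
proof (intro conjI allI impI)
  fix k x assume "x \<in> T k"
  then show "e k x \<cdot> u \<in> hom C U (sob X k)" using comp_hom[OF assms(3) smap_hom[OF assms(2)]] by blast
next
  fix j k \<phi> x assume d: "delta j k \<phi>" and x: "x \<in> T k"
  show "e j (Ta j k \<phi> x) \<cdot> u = sact X j k \<phi> \<cdot> e k x \<cdot> u"
    unfolding smap_act[OF assms(2) d x] by (rule assoc[OF assms(3) smap_hom[OF assms(2) x] sact_hom[OF assms(1) d]])
qed

lemma smap_post: assumes "simplicial_object C X" "simplicial_object C Y" "smor C X Y f" "smap_into C X U T Ta h"
  shows "smap_into C Y U T Ta (\<lambda>k x. f k \<cdot> h k x)"
  unfolding smap_into_def
proof (intro conjI allI impI)
  fix k x assume "x \<in> T k"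
  then show "f k \<cdot> h k x \<in> hom C U (sob Y k)" using comp_hom[OF smap_hom[OF assms(4)] smor_hom[OF assms(3)]] by blast
next
  fix j k \<phi> x assume d: "delta j k \<phi>" and x: "x \<in> T k"
  have h: "h k x \<in> hom C U (sob X k)" using assms(4) x by (rule smap_hom)
  have "f j \<cdot> h j (Ta j k \<phi> x) = f j \<cdot> sact X j k \<phi> \<cdot> h k x" using smap_act[OF assms(4) d x] by simp
  also have "\<dots> = (f j \<cdot> sact X j k \<phi>) \<cdot> h k x"
    using assoc[OF h sact_hom[OF assms(1) d] smor_hom[OF assms(3)]] by simp
  also have "\<dots> = (sact Y j k \<phi> \<cdot> f k) \<cdot> h k x" using smor_nat[OF assms(3) d] by simp
  also have "\<dots> = sact Y j k \<phi> \<cdot> f k \<cdot> h k x"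
    using assoc[OF h smor_hom[OF assms(3)] sact_hom[OF assms(2) d]] by simp
  finally show "f j \<cdot> h j (Ta j k \<phi> x) = sact Y j k \<phi> \<cdot> f k \<cdot> h k x" .
qed

lemma smap_mono: "smap_into C X U T Ta h \<Longrightarrow> (\<And>k. T' k \<subseteq> T k) \<Longrightarrow> smap_into C X U T' Ta h"
  unfolding smap_into_def by blast

lemma smap_cong: assumes "dc F" "smap_into C X U (S F) simplex_act h" "\<And>k \<alpha>. \<alpha> \<in> S F k \<Longrightarrow> h k \<alpha> = h' k \<alpha>"
  shows "smap_into C X U (S F) simplex_act h'"
  unfolding smap_into_def
proof (intro conjI allI impI)
  fix k x assume x: "x \<in> S F k" then show "h' k x \<in> hom C U (sob X k)" using smap_hom[OF assms(2) x] assms(3)[OF x] by simp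
next
  fix j k \<phi> x assume d: "delta j k \<phi>" and x: "x \<in> S F k"
  have sa: "simplex_act j k \<phi> x \<in> S F j" using S_act[OF assms(1) x d] .
  show "h' j (simplex_act j k \<phi> x) = sact X j k \<phi> \<cdot> h' k x"
    unfolding assms(3)[OF x, symmetric] assms(3)[OF sa, symmetric] by (rule smap_act[OF assms(2) d x])
qed

lemma smap_relabel: assumes "smap_into C X U (S F) simplex_act h" "\<And>k \<gamma>. \<gamma> \<in> S G k \<Longrightarrow> map g \<gamma> \<in> S F k"
  shows "smap_into C X U (S G) simplex_act (\<lambda>k \<gamma>. h k (map g \<gamma>))"
  unfolding smap_into_def
proof (intro conjI allI impI)
  fix k x assume x: "x \<in> S G k" then show "h k (map g x) \<in> hom C U (sob X k)"
    using smap_hom[OF assms(1) assms(2)[OF x]] by simp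
next
  fix j k \<phi> x assume d: "delta j k \<phi>" and x: "x \<in> S G k"
  have "set \<phi> \<subseteq> {..<length x}" using delta_set[OF d] x by (simp add: S_def)
  then have "map g (simplex_act j k \<phi> x) = simplex_act j k \<phi> (map g x)"
    by (simp add: simplex_act_def map_delta_comp)
  then show "h j (map g (simplex_act j k \<phi> x)) = sact X j k \<phi> \<cdot> h k (map g x)"
    using smap_act[OF assms(1) d assms(2)[OF x]] by simp
qed

section \<open>Map objects\<close>

lemma isMap_ob: "isMap C X F M e \<Longrightarrow> M \<in> cOb C" by (simp add: isMap_def)
lemma isMap_smap: "isMap C X F M e \<Longrightarrow> smap_into C X M (S F) simplex_act e" by (simp add: isMap_def)
lemma isMap_hom: "isMap C X F M e \<Longrightarrow> \<alpha> \<in> S F k \<Longrightarrow> e k \<alpha> \<in> hom C M (sob X k)"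
  by (rule smap_hom[OF isMap_smap])

lemma isMap_ex: assumes "isMap C X F M e" "U \<in> cOb C" "smap_into C X U (S F) simplex_act d"
  shows "\<exists>u. u \<in> hom C U M \<and> (\<forall>k \<alpha>. \<alpha> \<in> S F k \<longrightarrow> e k \<alpha> \<cdot> u = d k \<alpha>)"
proof -
  have "\<exists>!u. u \<in> hom C U M \<and> (\<forall>k \<alpha>. \<alpha> \<in> S F k \<longrightarrow> d k \<alpha> = e k \<alpha> \<cdot> u)"
    using assms unfolding isMap_def by blast
  then obtain u where "u \<in> hom C U M" "\<forall>k \<alpha>. \<alpha> \<in> S F k \<longrightarrow> d k \<alpha> = e k \<alpha> \<cdot> u" by blast
  then show ?thesis by (intro exI[of _ u]) simp
qed

lemma isMap_uniq: assumes "simplicial_object C X" "isMap C X F M e" "u \<in> hom C U M" "u' \<in> hom C U M"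
  "\<And>k \<alpha>. \<alpha> \<in> S F k \<Longrightarrow> e k \<alpha> \<cdot> u = e k \<alpha> \<cdot> u'"
  shows "u = u'"
proof -
  have U: "U \<in> cOb C" using assms(3) hom_ob by blast
  have s: "smap_into C X U (S F) simplex_act (\<lambda>k \<alpha>. e k \<alpha> \<cdot> u)"
    using smap_comp_r[OF assms(1) isMap_smap[OF assms(2)] assms(3)] .
  then have "\<exists>!v. v \<in> hom C U M \<and> (\<forall>k \<alpha>. \<alpha> \<in> S F k \<longrightarrow> e k \<alpha> \<cdot> u = e k \<alpha> \<cdot> v)"
    using assms(2) U unfolding isMap_def by blast
  then show ?thesis using assms(3,4,5) by blast
qed

lemma isMap_cong: assumes "dc F" "isMap C X F M e" "\<And>k \<alpha>. \<alpha> \<in> S F k \<Longrightarrow> e k \<alpha> = e' k \<alpha>"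
  shows "isMap C X F M e'"
proof -
  have "smap_into C X M (S F) simplex_act e'" using smap_cong[OF assms(1) isMap_smap[OF assms(2)]] assms(3) by blast
  moreover have "(\<forall>k \<alpha>. \<alpha> \<in> S F k \<longrightarrow> d k \<alpha> = e k \<alpha> \<cdot> u) \<longleftrightarrow> (\<forall>k \<alpha>. \<alpha> \<in> S F k \<longrightarrow> d k \<alpha> = e' k \<alpha> \<cdot> u)" for d u
    using assms(3) by auto
  ultimately show ?thesis using assms(2) unfolding isMap_def by simp
qed

lemma isMap_empty: "is_terminal C t \<Longrightarrow> isMap C X {} t e"
  unfolding isMap_def is_terminal_def smap_into_def by auto

lemma sact_smap: assumes "simplicial_object C X" "F \<subseteq> Pw {0..n}"
  shows "smap_into C X (sob X n) (S F) simplex_act (\<lambda>k \<alpha>. sact X k n \<alpha>)"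
  unfolding smap_into_def
proof (intro conjI allI impI)
  fix k x assume "x \<in> S F k"
  then have "delta k n x" using assms(2) delta_S S_mono by blast
  then show "sact X k n x \<in> hom C (sob X n) (sob X k)" using assms sact_hom by blast
next
  fix j k \<phi> x assume d: "delta j k \<phi>" and x: "x \<in> S F k"
  then have "delta k n x" using assms(2) delta_S S_mono by blast
  then show "sact X j n (simplex_act j k \<phi> x) = sact X j k \<phi> \<cdot> sact X k n x"
    using sact_comp[OF assms(1) d] by (simp add: simplex_act_def)
qed

lemma PM: assumes X: "simplicial_object C X" and fin: "finite \<sigma>" and ne: "\<sigma> \<noteq> {}"
  shows "isMap C X (Pw \<sigma>) (sob X (card \<sigma> - 1)) (\<lambda>k \<alpha>. sact X k (card \<sigma> - 1) (rl \<sigma> \<alpha>))"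
proof -
  let ?m = "card \<sigma> - 1"
  have sm: "smap_into C X (sob X ?m) (S (Pw {0..?m})) simplex_act (\<lambda>k \<alpha>. sact X k ?m \<alpha>)"
    by (rule sact_smap[OF X]) simp
  have s1: "smap_into C X (sob X ?m) (S (Pw \<sigma>)) simplex_act (\<lambda>k \<alpha>. sact X k ?m (rl \<sigma> \<alpha>))"
    unfolding rl_def by (rule smap_relabel[OF sm, where G="Pw \<sigma>" and g="ix \<sigma>"]) (use rl_S(1)[OF fin] in \<open>simp add: rl_def\<close>)
  have c: "card \<sigma> > 0" using fin ne by auto
  have iS: "iota \<sigma> \<in> S (Pw \<sigma>) ?m"
    using c fin ne by (auto simp: S_def Pw_def iota_def)
  have rli: "rl \<sigma> (iota \<sigma>) = delta_id ?m"
  proof -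
    have "il \<sigma> [0..<card \<sigma>] = iota \<sigma>" using map_nth[of "iota \<sigma>"] iota_len[OF fin] by (simp add: il_def)
    then have "rl \<sigma> (iota \<sigma>) = rl \<sigma> (il \<sigma> [0..<card \<sigma>])" by simp
    also have "\<dots> = [0..<card \<sigma>]" by (rule rl_il[OF fin]) auto
    finally show ?thesis using c by (simp add: delta_id_def)
  qed
  show ?thesis unfolding isMap_def
  proof (intro conjI allI impI)
    show "sob X ?m \<in> cOb C" using X sob_ob by blast
    show "smap_into C X (sob X ?m) (S (Pw \<sigma>)) simplex_act (\<lambda>k \<alpha>. sact X k ?m (rl \<sigma> \<alpha>))" by (rule s1)
    fix U d assume U: "U \<in> cOb C" and d: "smap_into C X U (S (Pw \<sigma>)) simplex_act d"
    have dh: "d ?m (iota \<sigma>) \<in> hom C U (sob X ?m)" using smap_hom[OF d iS] .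
    have key: "d k \<alpha> = sact X k ?m (rl \<sigma> \<alpha>) \<cdot> d ?m (iota \<sigma>)" if a: "\<alpha> \<in> S (Pw \<sigma>) k" for k \<alpha>
    proof -
      have r: "rl \<sigma> \<alpha> \<in> S (Pw {0..?m}) k" using rl_S[OF fin a] by blast
      then have dl: "delta k ?m (rl \<sigma> \<alpha>)" using delta_S by blast
      have "set \<alpha> \<subseteq> \<sigma>" using a by (auto simp: S_def Pw_def)
      then have "simplex_act k ?m (rl \<sigma> \<alpha>) (iota \<sigma>) = \<alpha>"
        using il_rl[OF fin] by (simp add: simplex_act_def delta_comp_def il_def rl_def)
      then show ?thesis using smap_act[OF d dl iS] by simp
    qed
    show "\<exists>!u. u \<in> hom C U (sob X ?m) \<and> (\<forall>k \<alpha>. \<alpha> \<in> S (Pw \<sigma>) k \<longrightarrow> d k \<alpha> = sact X k ?m (rl \<sigma> \<alpha>) \<cdot> u)"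
    proof
      show "d ?m (iota \<sigma>) \<in> hom C U (sob X ?m) \<and> (\<forall>k \<alpha>. \<alpha> \<in> S (Pw \<sigma>) k \<longrightarrow> d k \<alpha> = sact X k ?m (rl \<sigma> \<alpha>) \<cdot> d ?m (iota \<sigma>))"
        using dh key by blast
      fix u assume u: "u \<in> hom C U (sob X ?m) \<and> (\<forall>k \<alpha>. \<alpha> \<in> S (Pw \<sigma>) k \<longrightarrow> d k \<alpha> = sact X k ?m (rl \<sigma> \<alpha>) \<cdot> u)"
      then have "d ?m (iota \<sigma>) = cId C (sob X ?m) \<cdot> u" using iS rli sact_id[OF X] by metis
      then show "u = d ?m (iota \<sigma>)" using u idl by metis
    qed
  qed
qed

end


definition glue :: "nat set set \<Rightarrow> (nat \<Rightarrow> nat list \<Rightarrow> 'm) \<Rightarrow> (nat \<Rightarrow> nat list \<Rightarrow> 'm) \<Rightarrow> nat \<Rightarrow> nat list \<Rightarrow> 'm" where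
  "glue F0 h h' k \<alpha> = (if set \<alpha> \<in> F0 then h k \<alpha> else h' k \<alpha>)"

lemma S_Un_cases: "\<alpha> \<in> S (F0 \<union> G) k \<Longrightarrow> (set \<alpha> \<in> F0 \<Longrightarrow> \<alpha> \<in> S F0 k \<Longrightarrow> P) \<Longrightarrow> (set \<alpha> \<notin> F0 \<Longrightarrow> \<alpha> \<in> S G k \<Longrightarrow> P) \<Longrightarrow> P"
  by (auto simp: S_def)

lemma dec: assumes "dc F" "F \<noteq> {}"
  obtains \<sigma> where "\<sigma> \<in> F" "finite \<sigma>" "\<sigma> \<noteq> {}" "dc (F - {\<sigma>})" "F = (F - {\<sigma>}) \<union> Pw \<sigma>"
    "bd \<sigma> \<subseteq> F - {\<sigma>}" "\<sigma> \<notin> F - {\<sigma>}" "card (F - {\<sigma>}) < card F" "card (bd \<sigma>) < card F"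
proof -
  have fin: "finite F" using assms by (simp add: dc_def)
  have "finite (card ` F)" "card ` F \<noteq> {}" using fin assms(2) by auto
  then have "Max (card ` F) \<in> card ` F" by (rule Max_in)
  then obtain \<sigma> where s: "\<sigma> \<in> F" "card \<sigma> = Max (card ` F)" by auto
  have mx: "card A \<le> card \<sigma>" if "A \<in> F" for A
    using Max_ge[OF \<open>finite (card ` F)\<close>, of "card A"] s(2) that by simp
  have d1: "\<forall>A\<in>F. A \<noteq> {} \<and> finite A" and d2: "\<forall>A\<in>F. \<forall>B. B \<subseteq> A \<longrightarrow> B \<noteq> {} \<longrightarrow> B \<in> F"
    using assms(1) unfolding dc_def by blast+
  have fs: "finite \<sigma>" "\<sigma> \<noteq> {}" using d1 s(1) by auto
  have cl: "B \<in> F" if "B \<subseteq> A" "A \<in> F" "B \<noteq> {}" for A B using d2 that by blast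
  have dc0: "dc (F - {\<sigma>})"
  proof -
    have "\<forall>A\<in>F - {\<sigma>}. \<forall>B. B \<subseteq> A \<longrightarrow> B \<noteq> {} \<longrightarrow> B \<in> F - {\<sigma>}"
    proof (intro ballI allI impI)
      fix A B assume A: "A \<in> F - {\<sigma>}" and B: "B \<subseteq> A" "B \<noteq> {}"
      have "B \<noteq> \<sigma>"
      proof
        assume "B = \<sigma>"
        then have "\<sigma> \<subset> A" using A B by auto
        moreover have "finite A" using A d1 by blast
        ultimately have "card \<sigma> < card A" by (rule psubset_card_mono[rotated])
        then show False using mx A by force
      qed
      then show "B \<in> F - {\<sigma>}" using cl[OF B(1)] A B by auto
    qed
    then show ?thesis using fin d1 unfolding dc_def by blast
  qed
  have pw: "Pw \<sigma> \<subseteq> F" using cl s(1) by (auto simp: Pw_def)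
  have e: "F = (F - {\<sigma>}) \<union> Pw \<sigma>" using pw s(1) fs by (auto simp: Pw_def)
  have b: "bd \<sigma> \<subseteq> F - {\<sigma>}" using pw by (auto simp: bd_def Pw_def)
  have c1: "card (F - {\<sigma>}) < card F" using fin s(1) by (meson card_Diff1_less)
  have "card (bd \<sigma>) \<le> card (F - {\<sigma>})" using b fin by (simp add: card_mono)
  then have c2: "card (bd \<sigma>) < card F" using c1 by simp
  show ?thesis using that s(1) fs dc0 e b c1 c2 by blast
qed

context dcat begin

lemma glue_smap: assumes dc0: "dc F0" and fin: "finite \<sigma>"
  and h: "smap_into C X U (S F0) simplex_act h" and h': "smap_into C X U (S (Pw \<sigma>)) simplex_act h'"
  and ag: "\<And>k \<alpha>. \<alpha> \<in> S F0 k \<Longrightarrow> \<alpha> \<in> S (Pw \<sigma>) k \<Longrightarrow> h k \<alpha> = h' k \<alpha>"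
  shows "smap_into C X U (S (F0 \<union> Pw \<sigma>)) simplex_act (glue F0 h h')"
  unfolding smap_into_def
proof (intro conjI allI impI)
  fix k x assume x: "x \<in> S (F0 \<union> Pw \<sigma>) k"
  show "glue F0 h h' k x \<in> hom C U (sob X k)"
    by (rule S_Un_cases[OF x]) (simp_all add: glue_def smap_hom[OF h] smap_hom[OF h'])
next
  fix j k \<phi> x assume d: "delta j k \<phi>" and x: "x \<in> S (F0 \<union> Pw \<sigma>) k"
  show "glue F0 h h' j (simplex_act j k \<phi> x) = sact X j k \<phi> \<cdot> glue F0 h h' k x"
  proof (rule S_Un_cases[OF x])
    assume a: "set x \<in> F0" "x \<in> S F0 k"
    have "simplex_act j k \<phi> x \<in> S F0 j" by (rule S_act[OF dc0 a(2) d])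
    then have "set (simplex_act j k \<phi> x) \<in> F0" by (simp add: S_def)
    then show ?thesis using a smap_act[OF h d a(2)] by (simp add: glue_def)
  next
    assume a: "set x \<notin> F0" "x \<in> S (Pw \<sigma>) k"
    have s: "simplex_act j k \<phi> x \<in> S (Pw \<sigma>) j" by (rule S_act[OF dc_Pw[OF fin] a(2) d])
    have "glue F0 h h' j (simplex_act j k \<phi> x) = h' j (simplex_act j k \<phi> x)"
      using ag[of "simplex_act j k \<phi> x" j] s by (auto simp: glue_def S_def)
    then show ?thesis using a smap_act[OF h' d a(2)] by (simp add: glue_def)
  qed
qed

lemma glue_pb: assumes X: "simplicial_object C X" and dc0: "dc F0" and fin: "finite \<sigma>" and ne: "\<sigma> \<noteq> {}"
  and b: "bd \<sigma> \<subseteq> F0" and ns: "\<sigma> \<notin> F0"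
  and A0: "isMap C X F0 A0 a0" and D: "isMap C X (bd \<sigma>) D d"
  shows "\<exists>Q e'. isMap C X (F0 \<union> Pw \<sigma>) Q e'"
proof -
  define m where "m = card \<sigma> - 1"
  define e where "e = (\<lambda>k \<alpha>. sact X k m (rl \<sigma> \<alpha>))"
  have E: "isMap C X (Pw \<sigma>) (sob X m) e" unfolding e_def m_def by (rule PM[OF X fin ne])
  have sb0: "\<alpha> \<in> S F0 k" if "\<alpha> \<in> S (bd \<sigma>) k" for \<alpha> k using that b S_mono by blast
  have sbP: "\<alpha> \<in> S (Pw \<sigma>) k" if "\<alpha> \<in> S (bd \<sigma>) k" for \<alpha> k using that by (auto simp: S_def bd_def Pw_def)
  have s0P: "\<alpha> \<in> S (bd \<sigma>) k" if "\<alpha> \<in> S F0 k" "\<alpha> \<in> S (Pw \<sigma>) k" for \<alpha> k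
    using that ns by (auto simp: S_def bd_def Pw_def)
  obtain r0 where r0: "r0 \<in> hom C A0 D" "\<And>k \<alpha>. \<alpha> \<in> S (bd \<sigma>) k \<Longrightarrow> d k \<alpha> \<cdot> r0 = a0 k \<alpha>"
    using isMap_ex[OF D isMap_ob[OF A0] smap_mono[OF isMap_smap[OF A0]]] S_mono[OF b] by blast
  obtain rE where rE: "rE \<in> hom C (sob X m) D" "\<And>k \<alpha>. \<alpha> \<in> S (bd \<sigma>) k \<Longrightarrow> d k \<alpha> \<cdot> rE = e k \<alpha>"
    using isMap_ex[OF D isMap_ob[OF E] smap_mono[OF isMap_smap[OF E]]] sbP by blast
  obtain Q q0 q1 where pb: "is_pullback C r0 rE Q q0 q1"
    using pb_exists[of r0 rE] r0 rE by (auto simp: hom_def)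
  have q: "Q \<in> cOb C" "q0 \<in> hom C Q A0" "q1 \<in> hom C Q (sob X m)" "r0 \<cdot> q0 = rE \<cdot> q1"
    using pb_hom[OF pb] r0 rE by (auto simp: hom_def)
  have ag: "a0 k \<alpha> \<cdot> q0 = e k \<alpha> \<cdot> q1" if a: "\<alpha> \<in> S (bd \<sigma>) k" for k \<alpha>
    using r0(2)[OF a, symmetric] rE(2)[OF a, symmetric] isMap_hom[OF D a] r0(1) rE(1) q
    by (simp add: hom_def)
  show ?thesis
  proof (intro exI)
    show "isMap C X (F0 \<union> Pw \<sigma>) Q (glue F0 (\<lambda>k \<alpha>. a0 k \<alpha> \<cdot> q0) (\<lambda>k \<alpha>. e k \<alpha> \<cdot> q1))"
      unfolding isMap_def
    proof (intro conjI allI impI)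
      show "Q \<in> cOb C" by (rule q(1))
      show "smap_into C X Q (S (F0 \<union> Pw \<sigma>)) simplex_act (glue F0 (\<lambda>k \<alpha>. a0 k \<alpha> \<cdot> q0) (\<lambda>k \<alpha>. e k \<alpha> \<cdot> q1))"
        by (rule glue_smap[OF dc0 fin smap_comp_r[OF X isMap_smap[OF A0] q(2)] smap_comp_r[OF X isMap_smap[OF E] q(3)]])
           (rule ag[OF s0P])
      fix U g assume U: "U \<in> cOb C" and g: "smap_into C X U (S (F0 \<union> Pw \<sigma>)) simplex_act g"
      obtain z0 where z0: "z0 \<in> hom C U A0" "\<And>k \<alpha>. \<alpha> \<in> S F0 k \<Longrightarrow> a0 k \<alpha> \<cdot> z0 = g k \<alpha>"
        using isMap_ex[OF A0 U smap_mono[OF g]] S_mono[of F0 "F0 \<union> Pw \<sigma>"] by blast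
      obtain x where x: "x \<in> hom C U (sob X m)" "\<And>k \<alpha>. \<alpha> \<in> S (Pw \<sigma>) k \<Longrightarrow> e k \<alpha> \<cdot> x = g k \<alpha>"
        using isMap_ex[OF E U smap_mono[OF g]] S_mono[of "Pw \<sigma>" "F0 \<union> Pw \<sigma>"] by blast
      have rz: "r0 \<cdot> z0 = rE \<cdot> x"
      proof (rule isMap_uniq[OF X D comp_hom[OF z0(1) r0(1)] comp_hom[OF x(1) rE(1)]])
        fix k \<alpha> assume a: "\<alpha> \<in> S (bd \<sigma>) k"
        have "d k \<alpha> \<cdot> r0 \<cdot> z0 = g k \<alpha>"
          using assoc[OF z0(1) r0(1) isMap_hom[OF D a]] r0(2)[OF a] z0(2)[OF sb0[OF a]] by simp
        moreover have "d k \<alpha> \<cdot> rE \<cdot> x = g k \<alpha>"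
          using assoc[OF x(1) rE(1) isMap_hom[OF D a]] rE(2)[OF a] x(2)[OF sbP[OF a]] by simp
        ultimately show "d k \<alpha> \<cdot> r0 \<cdot> z0 = d k \<alpha> \<cdot> rE \<cdot> x" by simp
      qed
      obtain z where z: "z \<in> hom C U Q" "q0 \<cdot> z = z0" "q1 \<cdot> z = x"
        using pb_ex[OF pb, of z0 U x] z0(1) x(1) r0(1) rE(1) rz by (auto simp: hom_def)
      show "\<exists>!u. u \<in> hom C U Q \<and> (\<forall>k \<alpha>. \<alpha> \<in> S (F0 \<union> Pw \<sigma>) k \<longrightarrow>
              g k \<alpha> = glue F0 (\<lambda>k \<alpha>. a0 k \<alpha> \<cdot> q0) (\<lambda>k \<alpha>. e k \<alpha> \<cdot> q1) k \<alpha> \<cdot> u)"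
      proof (rule ex1I[of _ z], intro conjI allI impI)
        show "z \<in> hom C U Q" by (rule z(1))
        fix k \<alpha> assume a: "\<alpha> \<in> S (F0 \<union> Pw \<sigma>) k"
        show "g k \<alpha> = glue F0 (\<lambda>k \<alpha>. a0 k \<alpha> \<cdot> q0) (\<lambda>k \<alpha>. e k \<alpha> \<cdot> q1) k \<alpha> \<cdot> z"
        proof (rule S_Un_cases[OF a])
          assume a1: "set \<alpha> \<in> F0" "\<alpha> \<in> S F0 k"
          show ?thesis using a1 assoc[OF z(1) q(2) isMap_hom[OF A0 a1(2)]] z(2) z0(2)[OF a1(2)] by (simp add: glue_def)
        next
          assume a1: "set \<alpha> \<notin> F0" "\<alpha> \<in> S (Pw \<sigma>) k"
          show ?thesis using a1 assoc[OF z(1) q(3) isMap_hom[OF E a1(2)]] z(3) x(2)[OF a1(2)] by (simp add: glue_def)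
        qed
      next
        fix u assume u: "u \<in> hom C U Q \<and> (\<forall>k \<alpha>. \<alpha> \<in> S (F0 \<union> Pw \<sigma>) k \<longrightarrow>
              g k \<alpha> = glue F0 (\<lambda>k \<alpha>. a0 k \<alpha> \<cdot> q0) (\<lambda>k \<alpha>. e k \<alpha> \<cdot> q1) k \<alpha> \<cdot> u)"
        have u1: "u \<in> hom C U Q" using u by blast
        have ug: "g k \<alpha> = glue F0 (\<lambda>k \<alpha>. a0 k \<alpha> \<cdot> q0) (\<lambda>k \<alpha>. e k \<alpha> \<cdot> q1) k \<alpha> \<cdot> u"
          if "\<alpha> \<in> S (F0 \<union> Pw \<sigma>) k" for k \<alpha> using u that by blast
        have "q0 \<cdot> u = q0 \<cdot> z"
        proof (rule isMap_uniq[OF X A0 comp_hom[OF u1 q(2)] comp_hom[OF z(1) q(2)]])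
          fix k \<alpha> assume a: "\<alpha> \<in> S F0 k"
          have a': "\<alpha> \<in> S (F0 \<union> Pw \<sigma>) k" "set \<alpha> \<in> F0" using a S_mono[of F0 "F0 \<union> Pw \<sigma>"] by (auto simp: S_def)
          have "a0 k \<alpha> \<cdot> q0 \<cdot> u = g k \<alpha>"
            using assoc[OF u1 q(2) isMap_hom[OF A0 a]] ug[OF a'(1)] a'(2) by (simp add: glue_def)
          then show "a0 k \<alpha> \<cdot> q0 \<cdot> u = a0 k \<alpha> \<cdot> q0 \<cdot> z" using z(2) z0(2)[OF a] by simp
        qed
        moreover have "q1 \<cdot> u = q1 \<cdot> z"
        proof (rule isMap_uniq[OF X E comp_hom[OF u1 q(3)] comp_hom[OF z(1) q(3)]])
          fix k \<alpha> assume a: "\<alpha> \<in> S (Pw \<sigma>) k"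
          have a': "\<alpha> \<in> S (F0 \<union> Pw \<sigma>) k" using a S_mono[of "Pw \<sigma>" "F0 \<union> Pw \<sigma>"] by auto
          have "e k \<alpha> \<cdot> q1 \<cdot> u = g k \<alpha>"
          proof (cases "set \<alpha> \<in> F0")
            case True
            then have "\<alpha> \<in> S (bd \<sigma>) k" using a s0P by (auto simp: S_def)
            then show ?thesis using assoc[OF u1 q(3) isMap_hom[OF E a]] ug[OF a'] True ag by (simp add: glue_def)
          next
            case False
            then show ?thesis using assoc[OF u1 q(3) isMap_hom[OF E a]] ug[OF a'] by (simp add: glue_def)
          qed
          then show "e k \<alpha> \<cdot> q1 \<cdot> u = e k \<alpha> \<cdot> q1 \<cdot> z" using z(3) x(2)[OF a] by simp
        qed
        ultimately show "u = z" by (rule pb_uniq[OF pb u1 z(1)])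
      qed
    qed
  qed
qed

lemma Mex: assumes X: "simplicial_object C X" shows "dc F \<Longrightarrow> \<exists>M e. isMap C X F M e"
proof (induction "card F" arbitrary: F rule: less_induct)
  case (less F)
  show ?case
  proof (cases "F = {}")
    case True
    obtain t where "is_terminal C t" using fl by (auto simp: has_finite_limits_def)
    then show ?thesis using True isMap_empty by blast
  next
    case False
    obtain \<sigma> where \<sigma>: "\<sigma> \<in> F" "finite \<sigma>" "\<sigma> \<noteq> {}" "dc (F - {\<sigma>})" "F = (F - {\<sigma>}) \<union> Pw \<sigma>"
      "bd \<sigma> \<subseteq> F - {\<sigma>}" "\<sigma> \<notin> F - {\<sigma>}" "card (F - {\<sigma>}) < card F" "card (bd \<sigma>) < card F"
      using dec[OF less.prems False] by blast
    obtain A0 a0 where A0: "isMap C X (F - {\<sigma>}) A0 a0" using less.hyps[OF \<sigma>(8) \<sigma>(4)] by blast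
    obtain D d where D: "isMap C X (bd \<sigma>) D d" using less.hyps[OF \<sigma>(9) dc_bd[OF \<sigma>(2)]] by blast
    have "\<exists>Q e'. isMap C X ((F - {\<sigma>}) \<union> Pw \<sigma>) Q e'"
      by (rule glue_pb[OF X \<sigma>(4) \<sigma>(2) \<sigma>(3) \<sigma>(6) \<sigma>(7) A0 D])
    then show ?thesis using \<sigma>(5) by simp
  qed
qed

lemma rel_reindex: assumes fin: "finite \<sigma>" and ne: "\<sigma> \<noteq> {}"
  and R: "is_Map_rel C X Y f (S (bd \<sigma>)) (S (Pw \<sigma>)) simplex_act M a b"
  shows "is_Map_rel C X Y f (S (bd {0..card \<sigma> - 1})) (S (Pw {0..card \<sigma> - 1})) simplex_act M
           (\<lambda>k \<gamma>. a k (il \<sigma> \<gamma>)) (\<lambda>k \<gamma>. b k (il \<sigma> \<gamma>))"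
proof -
  let ?m = "card \<sigma> - 1"
  have c: "card \<sigma> > 0" using fin ne by auto
  have ilP: "il \<sigma> \<gamma> \<in> S (Pw \<sigma>) k" if "\<gamma> \<in> S (Pw {0..?m}) k" for \<gamma> k using il_S[OF fin that ne] .
  have gsub: "set \<gamma> \<subseteq> {..<card \<sigma>}" if "\<gamma> \<in> S (Pw {0..?m}) k" for \<gamma> k
    using that c by (auto simp: S_def Pw_def)
  have bdP: "\<gamma> \<in> S (Pw {0..?m}) k" if "\<gamma> \<in> S (bd {0..?m}) k" for \<gamma> k using that by (auto simp: S_def bd_def Pw_def)
  have bdP': "\<alpha> \<in> S (Pw \<sigma>) k" if "\<alpha> \<in> S (bd \<sigma>) k" for \<alpha> k using that by (auto simp: S_def bd_def Pw_def)
  have ilB: "il \<sigma> \<gamma> \<in> S (bd \<sigma>) k" if g: "\<gamma> \<in> S (bd {0..?m}) k" for \<gamma> k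
  proof -
    have gp: "\<gamma> \<in> S (Pw {0..?m}) k" by (rule bdP[OF g])
    have "set (rl \<sigma> (il \<sigma> \<gamma>)) \<noteq> {0..?m}" using g rl_il[OF fin gsub[OF gp]] by (auto simp: S_def bd_def)
    then have "set (il \<sigma> \<gamma>) \<noteq> \<sigma>" using rl_S(2)[OF fin ilP[OF gp]] by simp
    then show ?thesis using ilP[OF gp] S_bd_Pw[OF fin] by blast
  qed
  have rlP: "rl \<sigma> \<alpha> \<in> S (Pw {0..?m}) k" if "\<alpha> \<in> S (Pw \<sigma>) k" for \<alpha> k using rl_S(1)[OF fin that] .
  have rlB: "rl \<sigma> \<alpha> \<in> S (bd {0..?m}) k" if a: "\<alpha> \<in> S (bd \<sigma>) k" for \<alpha> k
  proof -
    have "set (rl \<sigma> \<alpha>) \<noteq> {0..?m}" using rl_S(2)[OF fin bdP'[OF a]] a S_bd_Pw[OF fin] by blast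
    then show ?thesis using rlP[OF bdP'[OF a]] by (auto simp: S_def bd_def Pw_def)
  qed
  have asub: "set \<alpha> \<subseteq> \<sigma>" if "\<alpha> \<in> S (Pw \<sigma>) k" for \<alpha> k using that by (auto simp: S_def Pw_def)
  have ilrl: "il \<sigma> (rl \<sigma> \<alpha>) = \<alpha>" if "\<alpha> \<in> S (Pw \<sigma>) k" for \<alpha> k using il_rl[OF fin asub[OF that]] .
  have rlil: "rl \<sigma> (il \<sigma> \<gamma>) = \<gamma>" if "\<gamma> \<in> S (Pw {0..?m}) k" for \<gamma> k using rl_il[OF fin gsub[OF that]] .
  have Rs: "M \<in> cOb C" "smap_into C X M (S (bd \<sigma>)) simplex_act a" "smap_into C Y M (S (Pw \<sigma>)) simplex_act b"
    "\<And>k x. x \<in> S (bd \<sigma>) k \<Longrightarrow> f k \<cdot> a k x = b k x"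
    using R unfolding is_Map_rel_def by blast+
  have Ru: "\<exists>!u. u \<in> hom C U M \<and> (\<forall>k x. x \<in> S (bd \<sigma>) k \<longrightarrow> a' k x = a k x \<cdot> u) \<and>
              (\<forall>k x. x \<in> S (Pw \<sigma>) k \<longrightarrow> b' k x = b k x \<cdot> u)"
    if "U \<in> cOb C" "smap_into C X U (S (bd \<sigma>)) simplex_act a'" "smap_into C Y U (S (Pw \<sigma>)) simplex_act b'"
       "\<forall>k x. x \<in> S (bd \<sigma>) k \<longrightarrow> f k \<cdot> a' k x = b' k x" for U a' b'
    using R that unfolding is_Map_rel_def by blast
  show ?thesis unfolding is_Map_rel_def
  proof (intro conjI allI impI)
    show "M \<in> cOb C" by (rule Rs(1))
    show "smap_into C X M (S (bd {0..?m})) simplex_act (\<lambda>k \<gamma>. a k (il \<sigma> \<gamma>))"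
      unfolding il_def by (rule smap_relabel[OF Rs(2)]) (rule ilB[unfolded il_def])
    show "smap_into C Y M (S (Pw {0..?m})) simplex_act (\<lambda>k \<gamma>. b k (il \<sigma> \<gamma>))"
      unfolding il_def by (rule smap_relabel[OF Rs(3)]) (rule ilP[unfolded il_def])
    fix k x assume "x \<in> S (bd {0..?m}) k"
    then show "f k \<cdot> a k (il \<sigma> x) = b k (il \<sigma> x)" using Rs(4) ilB by blast
  next
    fix U a' b' assume U: "U \<in> cOb C" and a': "smap_into C X U (S (bd {0..?m})) simplex_act a'"
      and b': "smap_into C Y U (S (Pw {0..?m})) simplex_act b'"
      and cp: "\<forall>k x. x \<in> S (bd {0..?m}) k \<longrightarrow> f k \<cdot> a' k x = b' k x"
    have a'': "smap_into C X U (S (bd \<sigma>)) simplex_act (\<lambda>k \<alpha>. a' k (rl \<sigma> \<alpha>))"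
      unfolding rl_def by (rule smap_relabel[OF a']) (rule rlB[unfolded rl_def])
    have b'': "smap_into C Y U (S (Pw \<sigma>)) simplex_act (\<lambda>k \<alpha>. b' k (rl \<sigma> \<alpha>))"
      unfolding rl_def by (rule smap_relabel[OF b']) (rule rlP[unfolded rl_def])
    have cp'': "\<forall>k x. x \<in> S (bd \<sigma>) k \<longrightarrow> f k \<cdot> a' k (rl \<sigma> x) = b' k (rl \<sigma> x)"
      using cp rlB by blast
    have ex: "\<exists>!u. u \<in> hom C U M \<and> (\<forall>k x. x \<in> S (bd \<sigma>) k \<longrightarrow> a' k (rl \<sigma> x) = a k x \<cdot> u) \<and>
              (\<forall>k x. x \<in> S (Pw \<sigma>) k \<longrightarrow> b' k (rl \<sigma> x) = b k x \<cdot> u)"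
      by (rule Ru[OF U a'' b'' cp''])
    have eqa: "(\<forall>k x. x \<in> S (bd \<sigma>) k \<longrightarrow> a' k (rl \<sigma> x) = a k x \<cdot> u) \<longleftrightarrow>
               (\<forall>k x. x \<in> S (bd {0..?m}) k \<longrightarrow> a' k x = a k (il \<sigma> x) \<cdot> u)" for u
    proof
      assume h: "\<forall>k x. x \<in> S (bd \<sigma>) k \<longrightarrow> a' k (rl \<sigma> x) = a k x \<cdot> u"
      show "\<forall>k x. x \<in> S (bd {0..?m}) k \<longrightarrow> a' k x = a k (il \<sigma> x) \<cdot> u"
      proof (intro allI impI)
        fix k x assume x: "x \<in> S (bd {0..?m}) k"
        show "a' k x = a k (il \<sigma> x) \<cdot> u" using h ilB[OF x] rlil[OF bdP[OF x]] by metis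
      qed
    next
      assume h: "\<forall>k x. x \<in> S (bd {0..?m}) k \<longrightarrow> a' k x = a k (il \<sigma> x) \<cdot> u"
      show "\<forall>k x. x \<in> S (bd \<sigma>) k \<longrightarrow> a' k (rl \<sigma> x) = a k x \<cdot> u"
      proof (intro allI impI)
        fix k x assume x: "x \<in> S (bd \<sigma>) k"
        show "a' k (rl \<sigma> x) = a k x \<cdot> u" using h rlB[OF x] ilrl[OF bdP'[OF x]] by metis
      qed
    qed
    have eqb: "(\<forall>k x. x \<in> S (Pw \<sigma>) k \<longrightarrow> b' k (rl \<sigma> x) = b k x \<cdot> u) \<longleftrightarrow>
               (\<forall>k x. x \<in> S (Pw {0..?m}) k \<longrightarrow> b' k x = b k (il \<sigma> x) \<cdot> u)" for u
    proof
      assume h: "\<forall>k x. x \<in> S (Pw \<sigma>) k \<longrightarrow> b' k (rl \<sigma> x) = b k x \<cdot> u"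
      show "\<forall>k x. x \<in> S (Pw {0..?m}) k \<longrightarrow> b' k x = b k (il \<sigma> x) \<cdot> u"
      proof (intro allI impI)
        fix k x assume x: "x \<in> S (Pw {0..?m}) k"
        show "b' k x = b k (il \<sigma> x) \<cdot> u" using h ilP[OF x] rlil[OF x] by metis
      qed
    next
      assume h: "\<forall>k x. x \<in> S (Pw {0..?m}) k \<longrightarrow> b' k x = b k (il \<sigma> x) \<cdot> u"
      show "\<forall>k x. x \<in> S (Pw \<sigma>) k \<longrightarrow> b' k (rl \<sigma> x) = b k x \<cdot> u"
      proof (intro allI impI)
        fix k x assume x: "x \<in> S (Pw \<sigma>) k"
        show "b' k (rl \<sigma> x) = b k x \<cdot> u" using h rlP[OF x] ilrl[OF x] by metis
      qed
    qed
    show "\<exists>!u. u \<in> hom C U M \<and> (\<forall>k x. x \<in> S (bd {0..?m}) k \<longrightarrow> a' k x = a k (il \<sigma> x) \<cdot> u) \<and>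
              (\<forall>k x. x \<in> S (Pw {0..?m}) k \<longrightarrow> b' k x = b k (il \<sigma> x) \<cdot> u)"
      using ex unfolding eqa eqb .
  qed
qed

lemma HS: assumes hc: "hypercover C Cov X Y f" and fin: "finite \<sigma>" and ne: "\<sigma> \<noteq> {}"
  and R: "is_Map_rel C X Y f (S (bd \<sigma>)) (S (Pw \<sigma>)) simplex_act M a b"
  and v: "v \<in> hom C (sob X (card \<sigma> - 1)) M"
  and va: "\<And>k \<alpha>. \<alpha> \<in> S (bd \<sigma>) k \<Longrightarrow> sact X k (card \<sigma> - 1) (rl \<sigma> \<alpha>) = a k \<alpha> \<cdot> v"
  and vb: "\<And>k \<alpha>. \<alpha> \<in> S (Pw \<sigma>) k \<Longrightarrow> sact Y k (card \<sigma> - 1) (rl \<sigma> \<alpha>) \<cdot> f (card \<sigma> - 1) = b k \<alpha> \<cdot> v"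
  shows "v \<in> Cov"
proof -
  let ?m = "card \<sigma> - 1"
  have c: "card \<sigma> > 0" using fin ne by auto
  have R': "is_Map_rel C X Y f (bdry_simplex ?m) (std_simplex ?m) simplex_act M
           (\<lambda>k \<gamma>. a k (il \<sigma> \<gamma>)) (\<lambda>k \<gamma>. b k (il \<sigma> \<gamma>))"
    unfolding bdry_S std_S by (rule rel_reindex[OF fin ne R])
  have ilP: "il \<sigma> \<gamma> \<in> S (Pw \<sigma>) k" if "\<gamma> \<in> S (Pw {0..?m}) k" for \<gamma> k using il_S[OF fin that ne] .
  have gsub: "set \<gamma> \<subseteq> {..<card \<sigma>}" if "\<gamma> \<in> S (Pw {0..?m}) k" for \<gamma> k
    using that c by (auto simp: S_def Pw_def)
  have bdP: "\<gamma> \<in> S (Pw {0..?m}) k" if "\<gamma> \<in> S (bd {0..?m}) k" for \<gamma> k using that by (auto simp: S_def bd_def Pw_def)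
  have ilB: "il \<sigma> \<gamma> \<in> S (bd \<sigma>) k" if g: "\<gamma> \<in> S (bd {0..?m}) k" for \<gamma> k
  proof -
    have gp: "\<gamma> \<in> S (Pw {0..?m}) k" by (rule bdP[OF g])
    have "set (rl \<sigma> (il \<sigma> \<gamma>)) \<noteq> {0..?m}" using g rl_il[OF fin gsub[OF gp]] by (auto simp: S_def bd_def)
    then have "set (il \<sigma> \<gamma>) \<noteq> \<sigma>" using rl_S(2)[OF fin ilP[OF gp]] by simp
    then show ?thesis using ilP[OF gp] S_bd_Pw[OF fin] by blast
  qed
  have rlil: "rl \<sigma> (il \<sigma> \<gamma>) = \<gamma>" if "\<gamma> \<in> S (Pw {0..?m}) k" for \<gamma> k using rl_il[OF fin gsub[OF that]] .
  have c1: "\<forall>k \<alpha>. \<alpha> \<in> bdry_simplex ?m k \<longrightarrow> sact X k ?m \<alpha> = a k (il \<sigma> \<alpha>) \<cdot> v"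
    unfolding bdry_S using va ilB rlil bdP by metis
  have c2: "\<forall>k \<alpha>. \<alpha> \<in> std_simplex ?m k \<longrightarrow> sact Y k ?m \<alpha> \<cdot> f ?m = b k (il \<sigma> \<alpha>) \<cdot> v"
    unfolding std_S using vb ilP rlil by metis
  show ?thesis using hc R' v c1 c2 unfolding hypercover_def by blast
qed

end

context dcat begin

lemma gen: "x \<cdot> y = z \<Longrightarrow> y \<in> cAr C \<Longrightarrow> x \<in> cAr C \<Longrightarrow> cDom C x = cCod C y \<Longrightarrow> W \<in> cAr C \<Longrightarrow> cCod C W = cDom C y \<Longrightarrow> x \<cdot> y \<cdot> W = z \<cdot> W"
  using assoc'[of W y x] by simp

lemma rel_parts: assumes "is_Map_rel C X Y f T1 T2 Ta M a b"
  shows "M \<in> cOb C" "smap_into C X M T1 Ta a" "smap_into C Y M T2 Ta b" "\<And>k x. x \<in> T1 k \<Longrightarrow> f k \<cdot> a k x = b k x"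
  using assms unfolding is_Map_rel_def by blast+

lemma rel_univ: assumes "is_Map_rel C X Y f T1 T2 Ta M a b" "U \<in> cOb C"
  "smap_into C X U T1 Ta a'" "smap_into C Y U T2 Ta b'" "\<And>k x. x \<in> T1 k \<Longrightarrow> f k \<cdot> a' k x = b' k x"
  shows "\<exists>!u. u \<in> hom C U M \<and> (\<forall>k x. x \<in> T1 k \<longrightarrow> a' k x = a k x \<cdot> u) \<and> (\<forall>k x. x \<in> T2 k \<longrightarrow> b' k x = b k x \<cdot> u)"
proof -
  have "\<forall>U a' b'. U \<in> cOb C \<longrightarrow> smap_into C X U T1 Ta a' \<longrightarrow> smap_into C Y U T2 Ta b' \<longrightarrow>
        (\<forall>k x. x \<in> T1 k \<longrightarrow> cComp C (f k) (a' k x) = b' k x) \<longrightarrow>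
        (\<exists>!u. u \<in> hom C U M \<and>
              (\<forall>k x. x \<in> T1 k \<longrightarrow> a' k x = cComp C (a k x) u) \<and>
              (\<forall>k x. x \<in> T2 k \<longrightarrow> b' k x = cComp C (b k x) u))"
    using assms(1) unfolding is_Map_rel_def by (elim conjE) assumption
  then show ?thesis using assms(2-5) by blast
qed

lemma S4: assumes X: "simplicial_object C X" and Y: "simplicial_object C Y" and Z: "simplicial_object C Z"
  and f: "smor C X Y f"
  and MX: "isMap C X F0 MX aX" and MY: "isMap C Y F0 MY aY" and w: "w \<in> hom C MX MY"
  and wc: "\<And>k \<alpha>. \<alpha> \<in> S F0 k \<Longrightarrow> aY k \<alpha> \<cdot> w = f k \<cdot> aX k \<alpha>"
  and R: "is_Map_rel C Y Z g (S F0) T simplex_act M a b" and r: "r \<in> hom C M MY"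
  and ra: "\<And>k \<alpha>. \<alpha> \<in> S F0 k \<Longrightarrow> aY k \<alpha> \<cdot> r = a k \<alpha>"
  and g: "\<And>k. g k \<in> hom C (sob Y k) (sob Z k)"
  and pb: "is_pullback C w r P p1 p2"
  shows "is_Map_rel C X Z (\<lambda>k. g k \<cdot> f k) (S F0) T simplex_act P (\<lambda>k \<alpha>. aX k \<alpha> \<cdot> p1) (\<lambda>k \<alpha>. b k \<alpha> \<cdot> p2)"
proof -
  have p: "P \<in> cOb C" "p1 \<in> hom C P MX" "p2 \<in> hom C P M" "w \<cdot> p1 = r \<cdot> p2"
    using pb_hom[OF pb] w r by (auto simp: hom_def)
  note Rp = rel_parts[OF R]
  have bh: "b k x \<in> hom C M (sob Z k)" if "x \<in> T k" for k x using smap_hom[OF Rp(3) that] .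
  show ?thesis unfolding is_Map_rel_def
  proof (intro conjI allI impI)
    show "P \<in> cOb C" by (rule p(1))
    show "smap_into C X P (S F0) simplex_act (\<lambda>k \<alpha>. aX k \<alpha> \<cdot> p1)" by (rule smap_comp_r[OF X isMap_smap[OF MX] p(2)])
    show "smap_into C Z P T simplex_act (\<lambda>k \<alpha>. b k \<alpha> \<cdot> p2)" by (rule smap_comp_r[OF Z Rp(3) p(3)])
    fix k \<alpha> assume a: "\<alpha> \<in> S F0 k"
    note hs = isMap_hom[OF MX a] isMap_hom[OF MY a] smap_hom[OF Rp(2) a] smor_hom[OF f, of k] g[of k] p w r
    show "(g k \<cdot> f k) \<cdot> aX k \<alpha> \<cdot> p1 = b k \<alpha> \<cdot> p2"
      using hs Rp(4)[OF a] by (simp add: hom_def wc[OF a, symmetric] gen[OF wc[OF a, symmetric]] p(4) gen[OF p(4)]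
         ra[OF a] gen[OF ra[OF a]] gen[OF Rp(4)[OF a]])
  next
    fix U a' b' assume U: "U \<in> cOb C" and a': "smap_into C X U (S F0) simplex_act a'"
      and b': "smap_into C Z U T simplex_act b'" and cp: "\<forall>k x. x \<in> S F0 k \<longrightarrow> (g k \<cdot> f k) \<cdot> a' k x = b' k x"
    obtain x where x: "x \<in> hom C U MX" "\<And>k \<alpha>. \<alpha> \<in> S F0 k \<Longrightarrow> aX k \<alpha> \<cdot> x = a' k \<alpha>"
      using isMap_ex[OF MX U a'] by blast
    have fa: "smap_into C Y U (S F0) simplex_act (\<lambda>k \<alpha>. f k \<cdot> a' k \<alpha>)" by (rule smap_post[OF X Y f a'])
    have cp': "g k \<cdot> f k \<cdot> a' k \<alpha> = b' k \<alpha>" if "\<alpha> \<in> S F0 k" for k \<alpha>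
      using cp that assoc[OF smap_hom[OF a' that] smor_hom[OF f] g] by simp
    have ey: "\<exists>!u. u \<in> hom C U M \<and> (\<forall>k \<alpha>. \<alpha> \<in> S F0 k \<longrightarrow> f k \<cdot> a' k \<alpha> = a k \<alpha> \<cdot> u) \<and> (\<forall>k \<alpha>. \<alpha> \<in> T k \<longrightarrow> b' k \<alpha> = b k \<alpha> \<cdot> u)"
      by (rule rel_univ[OF R U fa b' cp'])
    then obtain y where y: "y \<in> hom C U M" "\<And>k \<alpha>. \<alpha> \<in> S F0 k \<Longrightarrow> f k \<cdot> a' k \<alpha> = a k \<alpha> \<cdot> y" "\<And>k \<alpha>. \<alpha> \<in> T k \<Longrightarrow> b' k \<alpha> = b k \<alpha> \<cdot> y"
      by blast
    have wx: "w \<cdot> x = r \<cdot> y"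
    proof (rule isMap_uniq[OF Y MY comp_hom[OF x(1) w] comp_hom[OF y(1) r]])
      fix k \<alpha> assume a: "\<alpha> \<in> S F0 k"
      note hs = isMap_hom[OF MX a] isMap_hom[OF MY a] smap_hom[OF Rp(2) a] smor_hom[OF f, of k] x y w r
      show "aY k \<alpha> \<cdot> w \<cdot> x = aY k \<alpha> \<cdot> r \<cdot> y"
        using hs by (simp add: hom_def wc[OF a] gen[OF wc[OF a]] ra[OF a] gen[OF ra[OF a]] x(2)[OF a] y(2)[OF a, symmetric])
    qed
    obtain z where z: "z \<in> hom C U P" "p1 \<cdot> z = x" "p2 \<cdot> z = y"
      using pb_ex[OF pb, of x U y] x(1) y(1) w r wx by (auto simp: hom_def)
    show "\<exists>!u. u \<in> hom C U P \<and> (\<forall>k x. x \<in> S F0 k \<longrightarrow> a' k x = (aX k x \<cdot> p1) \<cdot> u) \<and>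
               (\<forall>k x. x \<in> T k \<longrightarrow> b' k x = (b k x \<cdot> p2) \<cdot> u)"
    proof (rule ex1I[of _ z], intro conjI allI impI)
      show "z \<in> hom C U P" by (rule z(1))
      fix k \<alpha> assume a: "\<alpha> \<in> S F0 k"
      show "a' k \<alpha> = (aX k \<alpha> \<cdot> p1) \<cdot> z" using assoc[OF z(1) p(2) isMap_hom[OF MX a]] z(2) x(2)[OF a] by simp
    next
      fix k \<alpha> assume a: "\<alpha> \<in> T k"
      show "b' k \<alpha> = (b k \<alpha> \<cdot> p2) \<cdot> z" using assoc[OF z(1) p(3) bh[OF a]] z(3) y(3)[OF a] by simp
    next
      fix u assume u: "u \<in> hom C U P \<and> (\<forall>k x. x \<in> S F0 k \<longrightarrow> a' k x = (aX k x \<cdot> p1) \<cdot> u) \<and>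
               (\<forall>k x. x \<in> T k \<longrightarrow> b' k x = (b k x \<cdot> p2) \<cdot> u)"
      have u1: "u \<in> hom C U P" using u by blast
      have ua: "a' k \<alpha> = aX k \<alpha> \<cdot> p1 \<cdot> u" if "\<alpha> \<in> S F0 k" for k \<alpha>
        using u that assoc[OF u1 p(2) isMap_hom[OF MX that]] by simp
      have ub: "b' k \<alpha> = b k \<alpha> \<cdot> p2 \<cdot> u" if "\<alpha> \<in> T k" for k \<alpha>
        using u that assoc[OF u1 p(3) bh[OF that]] by simp
      have e1: "p1 \<cdot> u = x"
      proof (rule isMap_uniq[OF X MX comp_hom[OF u1 p(2)] x(1)])
        fix k \<alpha> assume a: "\<alpha> \<in> S F0 k" then show "aX k \<alpha> \<cdot> p1 \<cdot> u = aX k \<alpha> \<cdot> x" using ua x(2) by simp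
      qed
      have e2: "p2 \<cdot> u = y"
      proof (rule ex1_eq[OF ey])
        show "y \<in> hom C U M \<and> (\<forall>k \<alpha>. \<alpha> \<in> S F0 k \<longrightarrow> f k \<cdot> a' k \<alpha> = a k \<alpha> \<cdot> y) \<and> (\<forall>k \<alpha>. \<alpha> \<in> T k \<longrightarrow> b' k \<alpha> = b k \<alpha> \<cdot> y)"
          using y by blast
        have "f k \<cdot> a' k \<alpha> = a k \<alpha> \<cdot> p2 \<cdot> u" if a: "\<alpha> \<in> S F0 k" for k \<alpha>
        proof -
          note hs = isMap_hom[OF MX a] isMap_hom[OF MY a] smap_hom[OF Rp(2) a] smor_hom[OF f, of k] p u1 w r x(1)
          have e: "r \<cdot> p2 = w \<cdot> p1" using p(4) by simp
          show ?thesis using hs by (simp add: hom_def ra[OF a, symmetric] gen[OF e] e wc[OF a] gen[OF wc[OF a]] e1 ua[OF a])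
        qed
        then show "p2 \<cdot> u \<in> hom C U M \<and> (\<forall>k \<alpha>. \<alpha> \<in> S F0 k \<longrightarrow> f k \<cdot> a' k \<alpha> = a k \<alpha> \<cdot> p2 \<cdot> u) \<and> (\<forall>k \<alpha>. \<alpha> \<in> T k \<longrightarrow> b' k \<alpha> = b k \<alpha> \<cdot> p2 \<cdot> u)"
          using comp_hom[OF u1 p(3)] ub by blast
      qed
      show "u = z" by (rule pb_uniq[OF pb u1 z(1)]) (simp_all add: e1 e2 z)
    qed
  qed
qed

end

context dcat begin

lemma TR: assumes Y: "simplicial_object C Y" and E: "isMap C Y G E e" and sub: "\<And>k. S F0 k \<subseteq> S G k"
  shows "is_Map_rel C Y Y (\<lambda>k. cId C (sob Y k)) (S F0) (S G) simplex_act E e e"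
  unfolding is_Map_rel_def
proof (intro conjI allI impI)
  show "E \<in> cOb C" by (rule isMap_ob[OF E])
  show "smap_into C Y E (S F0) simplex_act e" by (rule smap_mono[OF isMap_smap[OF E] sub])
  show "smap_into C Y E (S G) simplex_act e" by (rule isMap_smap[OF E])
  fix k x assume "x \<in> S F0 k"
  then show "cId C (sob Y k) \<cdot> e k x = e k x" using idl[OF isMap_hom[OF E subsetD[OF sub]]] by blast
next
  fix U a' b' assume U: "U \<in> cOb C" and a': "smap_into C Y U (S F0) simplex_act a'"
    and b': "smap_into C Y U (S G) simplex_act b'" and cp: "\<forall>k x. x \<in> S F0 k \<longrightarrow> cId C (sob Y k) \<cdot> a' k x = b' k x"
  have ab: "a' k x = b' k x" if x: "x \<in> S F0 k" for k x
  proof -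
    have "a' k x = cId C (sob Y k) \<cdot> a' k x" by (rule sym[OF idl[OF smap_hom[OF a' x]]])
    also have "\<dots> = b' k x" using cp x by blast
    finally show ?thesis .
  qed
  obtain u where u: "u \<in> hom C U E" "\<And>k \<alpha>. \<alpha> \<in> S G k \<Longrightarrow> e k \<alpha> \<cdot> u = b' k \<alpha>"
    using isMap_ex[OF E U b'] by blast
  show "\<exists>!u. u \<in> hom C U E \<and> (\<forall>k x. x \<in> S F0 k \<longrightarrow> a' k x = e k x \<cdot> u) \<and> (\<forall>k x. x \<in> S G k \<longrightarrow> b' k x = e k x \<cdot> u)"
  proof (rule ex1I[of _ u], intro conjI allI impI)
    show "u \<in> hom C U E" by (rule u(1))
    fix k x assume x: "x \<in> S F0 k" then show "a' k x = e k x \<cdot> u" using ab[OF x] u(2)[OF subsetD[OF sub x]] by simp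
  next
    fix k x assume x: "x \<in> S G k" then show "b' k x = e k x \<cdot> u" using u(2)[OF x] by simp
  next
    fix u' assume "u' \<in> hom C U E \<and> (\<forall>k x. x \<in> S F0 k \<longrightarrow> a' k x = e k x \<cdot> u') \<and> (\<forall>k x. x \<in> S G k \<longrightarrow> b' k x = e k x \<cdot> u')"
    then show "u' = u" using isMap_uniq[OF Y E _ u(1), of u'] u(2) by simp
  qed
qed

lemma id_comp_fun: assumes "smor C X Y f" shows "(\<lambda>k. cId C (sob Y k) \<cdot> f k) = f"
  using idl[OF smor_hom[OF assms]] by (simp add: fun_eq_iff)

end

context dcat begin

lemma CL_step:
  assumes X: "simplicial_object C X" and Y: "simplicial_object C Y" and f: "smor C X Y f"
  and hc: "hypercover C Cov X Y f"
  and dc0: "dc F0" and fin: "finite \<sigma>" and ne: "\<sigma> \<noteq> {}" and bsub: "bd \<sigma> \<subseteq> F0" and ns: "\<sigma> \<notin> F0"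
  and A: "isMap C X (F0 \<union> Pw \<sigma>) A aA" and B: "isMap C Y (F0 \<union> Pw \<sigma>) B aB"
  and w: "w \<in> hom C A B" and wc: "\<And>k \<alpha>. \<alpha> \<in> S (F0 \<union> Pw \<sigma>) k \<Longrightarrow> aB k \<alpha> \<cdot> w = f k \<cdot> aA k \<alpha>"
  and IH: "\<And>A0 a0 B0 b0 w0. isMap C X F0 A0 a0 \<Longrightarrow> isMap C Y F0 B0 b0 \<Longrightarrow> w0 \<in> hom C A0 B0 \<Longrightarrow>
            (\<And>k \<alpha>. \<alpha> \<in> S F0 k \<Longrightarrow> b0 k \<alpha> \<cdot> w0 = f k \<cdot> a0 k \<alpha>) \<Longrightarrow> w0 \<in> Cov"
  shows "w \<in> Cov"
proof -
  define m where "m = card \<sigma> - 1"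
  define eX where "eX = (\<lambda>k \<alpha>. sact X k m (rl \<sigma> \<alpha>))"
  define eY where "eY = (\<lambda>k \<alpha>. sact Y k m (rl \<sigma> \<alpha>))"
  have EX: "isMap C X (Pw \<sigma>) (sob X m) eX" unfolding eX_def m_def by (rule PM[OF X fin ne])
  have EY: "isMap C Y (Pw \<sigma>) (sob Y m) eY" unfolding eY_def m_def by (rule PM[OF Y fin ne])
  let ?F = "F0 \<union> Pw \<sigma>"
  have sF0: "\<alpha> \<in> S ?F k" if "\<alpha> \<in> S F0 k" for \<alpha> k using that S_mono[of F0 ?F] by blast
  have sFP: "\<alpha> \<in> S ?F k" if "\<alpha> \<in> S (Pw \<sigma>) k" for \<alpha> k using that S_mono[of "Pw \<sigma>" ?F] by blast
  have sb0: "\<alpha> \<in> S F0 k" if "\<alpha> \<in> S (bd \<sigma>) k" for \<alpha> k using that bsub S_mono by blast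
  have sbP: "\<alpha> \<in> S (Pw \<sigma>) k" if "\<alpha> \<in> S (bd \<sigma>) k" for \<alpha> k using that by (auto simp: S_def bd_def Pw_def)
  have s0P: "\<alpha> \<in> S (bd \<sigma>) k" if "\<alpha> \<in> S F0 k" "\<alpha> \<in> S (Pw \<sigma>) k" for \<alpha> k
    using that ns by (auto simp: S_def bd_def Pw_def)
  have nat: "f k \<cdot> eX k \<alpha> = eY k \<alpha> \<cdot> f m" if a: "\<alpha> \<in> S (Pw \<sigma>) k" for k \<alpha>
  proof -
    have "delta k m (rl \<sigma> \<alpha>)" using rl_S(1)[OF fin a] delta_S unfolding m_def by blast
    then show ?thesis unfolding eX_def eY_def by (rule smor_nat[OF f])
  qed
  have dcb: "dc (bd \<sigma>)" by (rule dc_bd[OF fin])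
  obtain A0 a0 where A0: "isMap C X F0 A0 a0" using Mex[OF X dc0] by blast
  obtain B0 b0 where B0: "isMap C Y F0 B0 b0" using Mex[OF Y dc0] by blast
  obtain DX dX where DX: "isMap C X (bd \<sigma>) DX dX" using Mex[OF X dcb] by blast
  obtain DY dY where DY: "isMap C Y (bd \<sigma>) DY dY" using Mex[OF Y dcb] by blast
  note oA = isMap_ob[OF A] and oB = isMap_ob[OF B] and oA0 = isMap_ob[OF A0] and oB0 = isMap_ob[OF B0]
    and oDX = isMap_ob[OF DX] and oDY = isMap_ob[OF DY] and oEX = isMap_ob[OF EX] and oEY = isMap_ob[OF EY]
  obtain w0 where w0: "w0 \<in> hom C A0 B0" "\<And>k \<alpha>. \<alpha> \<in> S F0 k \<Longrightarrow> b0 k \<alpha> \<cdot> w0 = f k \<cdot> a0 k \<alpha>"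
    using isMap_ex[OF B0 oA0 smap_post[OF X Y f isMap_smap[OF A0]]] by blast
  have w0c: "w0 \<in> Cov" by (rule IH[OF A0 B0 w0])
  obtain rA where rA: "rA \<in> hom C A A0" "\<And>k \<alpha>. \<alpha> \<in> S F0 k \<Longrightarrow> a0 k \<alpha> \<cdot> rA = aA k \<alpha>"
    using isMap_ex[OF A0 oA smap_mono[OF isMap_smap[OF A]]] S_mono[of F0 ?F] by blast
  obtain rB where rB: "rB \<in> hom C B B0" "\<And>k \<alpha>. \<alpha> \<in> S F0 k \<Longrightarrow> b0 k \<alpha> \<cdot> rB = aB k \<alpha>"
    using isMap_ex[OF B0 oB smap_mono[OF isMap_smap[OF B]]] S_mono[of F0 ?F] by blast
  obtain rAE where rAE: "rAE \<in> hom C A (sob X m)" "\<And>k \<alpha>. \<alpha> \<in> S (Pw \<sigma>) k \<Longrightarrow> eX k \<alpha> \<cdot> rAE = aA k \<alpha>"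
    using isMap_ex[OF EX oA smap_mono[OF isMap_smap[OF A]]] S_mono[of "Pw \<sigma>" ?F] by blast
  obtain rBE where rBE: "rBE \<in> hom C B (sob Y m)" "\<And>k \<alpha>. \<alpha> \<in> S (Pw \<sigma>) k \<Longrightarrow> eY k \<alpha> \<cdot> rBE = aB k \<alpha>"
    using isMap_ex[OF EY oB smap_mono[OF isMap_smap[OF B]]] S_mono[of "Pw \<sigma>" ?F] by blast
  obtain wD where wD: "wD \<in> hom C DX DY" "\<And>k \<alpha>. \<alpha> \<in> S (bd \<sigma>) k \<Longrightarrow> dY k \<alpha> \<cdot> wD = f k \<cdot> dX k \<alpha>"
    using isMap_ex[OF DY oDX smap_post[OF X Y f isMap_smap[OF DX]]] by blast
  obtain rEY where rEY: "rEY \<in> hom C (sob Y m) DY" "\<And>k \<alpha>. \<alpha> \<in> S (bd \<sigma>) k \<Longrightarrow> dY k \<alpha> \<cdot> rEY = eY k \<alpha>"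
    using isMap_ex[OF DY oEY smap_mono[OF isMap_smap[OF EY]]] sbP by blast
  obtain rEX where rEX: "rEX \<in> hom C (sob X m) DX" "\<And>k \<alpha>. \<alpha> \<in> S (bd \<sigma>) k \<Longrightarrow> dX k \<alpha> \<cdot> rEX = eX k \<alpha>"
    using isMap_ex[OF DX oEX smap_mono[OF isMap_smap[OF EX]]] sbP by blast
  obtain rA0D where rA0D: "rA0D \<in> hom C A0 DX" "\<And>k \<alpha>. \<alpha> \<in> S (bd \<sigma>) k \<Longrightarrow> dX k \<alpha> \<cdot> rA0D = a0 k \<alpha>"
    using isMap_ex[OF DX oA0 smap_mono[OF isMap_smap[OF A0]]] sb0 by blast
  obtain P p1 p2 where pbP: "is_pullback C w0 rB P p1 p2"
    using pb_exists[of w0 rB] w0(1) rB(1) by (auto simp: hom_def)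
  have p: "P \<in> cOb C" "p1 \<in> hom C P A0" "p2 \<in> hom C P B" "w0 \<cdot> p1 = rB \<cdot> p2"
    using pb_hom[OF pbP] w0(1) rB(1) by (auto simp: hom_def)
  have p2c: "p2 \<in> Cov" by (rule pb_cov[OF w0c pbP])
  obtain Rl l1 l2 where pbR: "is_pullback C wD rEY Rl l1 l2"
    using pb_exists[of wD rEY] wD(1) rEY(1) by (auto simp: hom_def)
  have l: "Rl \<in> cOb C" "l1 \<in> hom C Rl DX" "l2 \<in> hom C Rl (sob Y m)" "wD \<cdot> l1 = rEY \<cdot> l2"
    using pb_hom[OF pbR] wD(1) rEY(1) by (auto simp: hom_def)
  have R: "is_Map_rel C X Y f (S (bd \<sigma>)) (S (Pw \<sigma>)) simplex_act Rl (\<lambda>k \<alpha>. dX k \<alpha> \<cdot> l1) (\<lambda>k \<alpha>. eY k \<alpha> \<cdot> l2)"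
  proof -
    have TR0: "is_Map_rel C Y Y (\<lambda>k. cId C (sob Y k)) (S (bd \<sigma>)) (S (Pw \<sigma>)) simplex_act (sob Y m) eY eY"
      by (rule TR[OF Y EY]) (use sbP in blast)
    have "is_Map_rel C X Y (\<lambda>k. cId C (sob Y k) \<cdot> f k) (S (bd \<sigma>)) (S (Pw \<sigma>)) simplex_act Rl (\<lambda>k \<alpha>. dX k \<alpha> \<cdot> l1) (\<lambda>k \<alpha>. eY k \<alpha> \<cdot> l2)"
      by (rule S4[OF X Y Y f DX DY wD TR0 rEY(1) rEY(2) id_hom[OF sob_ob[OF Y]] pbR])
    then show ?thesis unfolding id_comp_fun[OF f] .
  qed
  have fm: "f m \<in> hom C (sob X m) (sob Y m)" by (rule smor_hom[OF f])
  have wr: "wD \<cdot> rEX = rEY \<cdot> f m"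
  proof (rule isMap_uniq[OF Y DY comp_hom[OF rEX(1) wD(1)] comp_hom[OF fm rEY(1)]])
    fix k \<alpha> assume a: "\<alpha> \<in> S (bd \<sigma>) k"
    note hs = isMap_hom[OF DX a] isMap_hom[OF DY a] isMap_hom[OF EX sbP[OF a]] isMap_hom[OF EY sbP[OF a]]
      smor_hom[OF f, of k] fm wD(1) rEX(1) rEY(1)
    show "dY k \<alpha> \<cdot> wD \<cdot> rEX = dY k \<alpha> \<cdot> rEY \<cdot> f m"
      using hs by (simp add: hom_def wD(2)[OF a] gen[OF wD(2)[OF a]] rEX(2)[OF a] gen[OF rEX(2)[OF a]]
          rEY(2)[OF a] gen[OF rEY(2)[OF a]] nat[OF sbP[OF a]])
  qed
  obtain s where s: "s \<in> hom C (sob X m) Rl" "l1 \<cdot> s = rEX" "l2 \<cdot> s = f m"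
    using pb_ex[OF pbR, of rEX "sob X m" "f m"] rEX(1) fm wD(1) rEY(1) wr by (auto simp: hom_def)
  have sc: "s \<in> Cov"
  proof (rule HS[OF hc fin ne R s(1)[unfolded m_def]])
    fix k \<alpha> assume a: "\<alpha> \<in> S (bd \<sigma>) k"
    show "sact X k (card \<sigma> - 1) (rl \<sigma> \<alpha>) = (dX k \<alpha> \<cdot> l1) \<cdot> s"
      using assoc[OF s(1) l(2) isMap_hom[OF DX a]] s(2) rEX(2)[OF a] by (simp add: eX_def m_def)
  next
    fix k \<alpha> assume a: "\<alpha> \<in> S (Pw \<sigma>) k"
    show "sact Y k (card \<sigma> - 1) (rl \<sigma> \<alpha>) \<cdot> f (card \<sigma> - 1) = (eY k \<alpha> \<cdot> l2) \<cdot> s"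
      using assoc[OF s(1) l(3) isMap_hom[OF EY a]] s(3) by (simp add: eY_def m_def)
  qed
  have tq: "wD \<cdot> rA0D \<cdot> p1 = rEY \<cdot> rBE \<cdot> p2"
  proof (rule isMap_uniq[OF Y DY comp_hom[OF comp_hom[OF p(2) rA0D(1)] wD(1)] comp_hom[OF comp_hom[OF p(3) rBE(1)] rEY(1)]])
    fix k \<alpha> assume a: "\<alpha> \<in> S (bd \<sigma>) k"
    note hs = isMap_hom[OF DX a] isMap_hom[OF DY a] isMap_hom[OF EY sbP[OF a]] isMap_hom[OF A0 sb0[OF a]]
      isMap_hom[OF B0 sb0[OF a]] isMap_hom[OF B sF0[OF sb0[OF a]]]
      smor_hom[OF f, of k] wD(1) rA0D(1) p rEY(1) rBE(1) w0(1) rB(1)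
    have e3: "f k \<cdot> a0 k \<alpha> = b0 k \<alpha> \<cdot> w0" using w0(2)[OF sb0[OF a]] by simp
    show "dY k \<alpha> \<cdot> wD \<cdot> rA0D \<cdot> p1 = dY k \<alpha> \<cdot> rEY \<cdot> rBE \<cdot> p2"
      using hs by (simp add: hom_def wD(2)[OF a] gen[OF wD(2)[OF a]] rA0D(2)[OF a] gen[OF rA0D(2)[OF a]]
          e3 gen[OF e3] p(4) gen[OF p(4)] rB(2)[OF sb0[OF a]] gen[OF rB(2)[OF sb0[OF a]]]
          rEY(2)[OF a] gen[OF rEY(2)[OF a]] rBE(2)[OF sbP[OF a]] gen[OF rBE(2)[OF sbP[OF a]]])
  qed
  obtain t where t: "t \<in> hom C P Rl" "l1 \<cdot> t = rA0D \<cdot> p1" "l2 \<cdot> t = rBE \<cdot> p2"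
    using pb_ex[OF pbR, of "rA0D \<cdot> p1" P "rBE \<cdot> p2"] comp_hom[OF p(2) rA0D(1)] comp_hom[OF p(3) rBE(1)] wD(1) rEY(1) tq
      assoc[OF p(2) rA0D(1) wD(1)] assoc[OF p(3) rBE(1) rEY(1)]
    by (auto simp: hom_def)
  have cq: "w0 \<cdot> rA = rB \<cdot> w"
  proof (rule isMap_uniq[OF Y B0 comp_hom[OF rA(1) w0(1)] comp_hom[OF w rB(1)]])
    fix k \<alpha> assume a: "\<alpha> \<in> S F0 k"
    note hs = isMap_hom[OF A0 a] isMap_hom[OF B0 a] isMap_hom[OF A sF0[OF a]] isMap_hom[OF B sF0[OF a]]
      smor_hom[OF f, of k] rA(1) rB(1) w0(1) w
    show "b0 k \<alpha> \<cdot> w0 \<cdot> rA = b0 k \<alpha> \<cdot> rB \<cdot> w"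
      using hs by (simp add: hom_def w0(2)[OF a] gen[OF w0(2)[OF a]] rA(2)[OF a] gen[OF rA(2)[OF a]]
          rB(2)[OF a] gen[OF rB(2)[OF a]] wc[OF sF0[OF a]])
  qed
  obtain c where c: "c \<in> hom C A P" "p1 \<cdot> c = rA" "p2 \<cdot> c = w"
    using pb_ex[OF pbP, of rA A w] rA(1) w w0(1) rB(1) cq by (auto simp: hom_def)
  have pbA: "is_pullback C s t A rAE c"
    unfolding is_pullback_def
  proof (intro conjI allI impI)
    show "s \<in> cAr C" "t \<in> cAr C" "cCod C s = cCod C t" "A \<in> cOb C"
      using s(1) t(1) oA by (auto simp: hom_def)
    show "rAE \<in> hom C A (cDom C s)" "c \<in> hom C A (cDom C t)" using rAE(1) c(1) s(1) t(1) by (auto simp: hom_def)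
    show "s \<cdot> rAE = t \<cdot> c"
    proof (rule pb_uniq[OF pbR comp_hom[OF rAE(1) s(1)] comp_hom[OF c(1) t(1)]])
      show "l1 \<cdot> s \<cdot> rAE = l1 \<cdot> t \<cdot> c"
      proof (rule isMap_uniq[OF X DX comp_hom[OF comp_hom[OF rAE(1) s(1)] l(2)] comp_hom[OF comp_hom[OF c(1) t(1)] l(2)]])
        fix k \<alpha> assume a: "\<alpha> \<in> S (bd \<sigma>) k"
        note hs = isMap_hom[OF DX a] isMap_hom[OF EX sbP[OF a]] isMap_hom[OF A0 sb0[OF a]] isMap_hom[OF A sF0[OF sb0[OF a]]]
          rAE(1) s(1) c(1) t(1) l(2) rEX(1) rA0D(1) p(2) rA(1)
        show "dX k \<alpha> \<cdot> l1 \<cdot> s \<cdot> rAE = dX k \<alpha> \<cdot> l1 \<cdot> t \<cdot> c"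
          using hs by (simp add: hom_def s(2) gen[OF s(2)] t(2) gen[OF t(2)] rEX(2)[OF a] gen[OF rEX(2)[OF a]]
            rAE(2)[OF sbP[OF a]] rA0D(2)[OF a] gen[OF rA0D(2)[OF a]] c(2) gen[OF c(2)] rA(2)[OF sb0[OF a]])
      qed
      show "l2 \<cdot> s \<cdot> rAE = l2 \<cdot> t \<cdot> c"
      proof (rule isMap_uniq[OF Y EY comp_hom[OF comp_hom[OF rAE(1) s(1)] l(3)] comp_hom[OF comp_hom[OF c(1) t(1)] l(3)]])
        fix k \<alpha> assume a: "\<alpha> \<in> S (Pw \<sigma>) k"
        note hs = isMap_hom[OF EY a] isMap_hom[OF EX a] isMap_hom[OF A sFP[OF a]] isMap_hom[OF B sFP[OF a]]
          smor_hom[OF f, of k] fm rAE(1) s(1) c(1) t(1) l(3) rBE(1) p(3) w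
        have e1: "eY k \<alpha> \<cdot> f m = f k \<cdot> eX k \<alpha>" using nat[OF a] by simp
        show "eY k \<alpha> \<cdot> l2 \<cdot> s \<cdot> rAE = eY k \<alpha> \<cdot> l2 \<cdot> t \<cdot> c"
          using hs by (simp add: hom_def s(3) gen[OF s(3)] t(3) gen[OF t(3)] e1 gen[OF e1]
            rAE(2)[OF a] rBE(2)[OF a] gen[OF rBE(2)[OF a]] c(3) gen[OF c(3)] wc[OF sFP[OF a]])
      qed
    qed
    fix U p' q' assume U: "U \<in> cOb C" and p': "p' \<in> hom C U (cDom C s)" and q': "q' \<in> hom C U (cDom C t)"
      and sq: "s \<cdot> p' = t \<cdot> q'"
    have p'': "p' \<in> hom C U (sob X m)" and q'': "q' \<in> hom C U P" using p' q' s(1) t(1) by (auto simp: hom_def)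
    define h where "h = (\<lambda>k \<alpha>. a0 k \<alpha> \<cdot> p1 \<cdot> q')"
    define h' where "h' = (\<lambda>k \<alpha>. eX k \<alpha> \<cdot> p')"
    have hsm: "smap_into C X U (S F0) simplex_act h"
      unfolding h_def using smap_comp_r[OF X isMap_smap[OF A0] comp_hom[OF q'' p(2)]] .
    have h'sm: "smap_into C X U (S (Pw \<sigma>)) simplex_act h'"
      unfolding h'_def using smap_comp_r[OF X isMap_smap[OF EX] p''] .
    have ag: "h k \<alpha> = h' k \<alpha>" if a: "\<alpha> \<in> S (bd \<sigma>) k" for k \<alpha>
    proof -
      note hs = isMap_hom[OF DX a] isMap_hom[OF EX sbP[OF a]] isMap_hom[OF A0 sb0[OF a]]
        rA0D(1) p(2) q'' p'' s(1) t(1) l(2) rEX(1)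
      have e1: "a0 k \<alpha> = dX k \<alpha> \<cdot> rA0D" using rA0D(2)[OF a] by simp
      have e2: "rA0D \<cdot> p1 = l1 \<cdot> t" using t(2) by simp
      have e3: "t \<cdot> q' = s \<cdot> p'" using sq by simp
      have e4: "eX k \<alpha> = dX k \<alpha> \<cdot> rEX" using rEX(2)[OF a] by simp
      show ?thesis unfolding h_def h'_def
        using hs by (simp add: hom_def e1 e4 e2 gen[OF e2] e3 gen[OF e3] s(2) gen[OF s(2)])
    qed
    have gsm: "smap_into C X U (S ?F) simplex_act (glue F0 h h')"
      by (rule glue_smap[OF dc0 fin hsm h'sm]) (rule ag[OF s0P])
    obtain u where u: "u \<in> hom C U A" "\<And>k \<alpha>. \<alpha> \<in> S ?F k \<Longrightarrow> aA k \<alpha> \<cdot> u = glue F0 h h' k \<alpha>"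
      using isMap_ex[OF A U gsm] by blast
    have gP: "glue F0 h h' k \<alpha> = h' k \<alpha>" if a: "\<alpha> \<in> S (Pw \<sigma>) k" for k \<alpha>
      using ag[OF s0P[OF _ a]] a by (auto simp: glue_def S_def)
    have g0: "glue F0 h h' k \<alpha> = h k \<alpha>" if a: "\<alpha> \<in> S F0 k" for k \<alpha>
      using a by (auto simp: glue_def S_def)
    have u1: "rAE \<cdot> u = p'"
    proof (rule isMap_uniq[OF X EX comp_hom[OF u(1) rAE(1)] p''])
      fix k \<alpha> assume a: "\<alpha> \<in> S (Pw \<sigma>) k"
      show "eX k \<alpha> \<cdot> rAE \<cdot> u = eX k \<alpha> \<cdot> p'"
        using assoc[OF u(1) rAE(1) isMap_hom[OF EX a]] rAE(2)[OF a] u(2)[OF sFP[OF a]] gP[OF a] by (simp add: h'_def)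
    qed
    have u2: "c \<cdot> u = q'"
    proof (rule pb_uniq[OF pbP comp_hom[OF u(1) c(1)] q''])
      show "p1 \<cdot> c \<cdot> u = p1 \<cdot> q'"
      proof (rule isMap_uniq[OF X A0 comp_hom[OF comp_hom[OF u(1) c(1)] p(2)] comp_hom[OF q'' p(2)]])
        fix k \<alpha> assume a: "\<alpha> \<in> S F0 k"
        note hs = isMap_hom[OF A0 a] isMap_hom[OF A sF0[OF a]] u(1) c(1) p(2) rA(1) q''
        have e: "aA k \<alpha> \<cdot> u = a0 k \<alpha> \<cdot> p1 \<cdot> q'" using u(2)[OF sF0[OF a]] g0[OF a] by (simp add: h_def)
        show "a0 k \<alpha> \<cdot> p1 \<cdot> c \<cdot> u = a0 k \<alpha> \<cdot> p1 \<cdot> q'"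
          using hs by (simp add: hom_def c(2) gen[OF c(2)] rA(2)[OF a] gen[OF rA(2)[OF a]] e)
      qed
      show "p2 \<cdot> c \<cdot> u = p2 \<cdot> q'"
      proof (rule isMap_uniq[OF Y B comp_hom[OF comp_hom[OF u(1) c(1)] p(3)] comp_hom[OF q'' p(3)]])
        fix k \<alpha> assume a: "\<alpha> \<in> S ?F k"
        note hs0 = isMap_hom[OF A a] isMap_hom[OF B a] smor_hom[OF f, of k] u(1) c(1) p(3) w q''
        have L: "aB k \<alpha> \<cdot> p2 \<cdot> c \<cdot> u = f k \<cdot> glue F0 h h' k \<alpha>"
          using hs0 by (simp add: hom_def c(3) gen[OF c(3)] wc[OF a] gen[OF wc[OF a]] u(2)[OF a])
        have "aB k \<alpha> \<cdot> p2 \<cdot> q' = f k \<cdot> glue F0 h h' k \<alpha>"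
        proof (rule S_Un_cases[OF a])
          assume a1: "set \<alpha> \<in> F0" "\<alpha> \<in> S F0 k"
          note hs = hs0 isMap_hom[OF B0 a1(2)] isMap_hom[OF A0 a1(2)] rB(1) w0(1) p(2)
          have e1: "aB k \<alpha> = b0 k \<alpha> \<cdot> rB" using rB(2)[OF a1(2)] by simp
          have e2: "rB \<cdot> p2 = w0 \<cdot> p1" using p(4) by simp
          show ?thesis using hs g0[OF a1(2)]
            by (simp add: hom_def h_def e1 e2 gen[OF e2] w0(2)[OF a1(2)] gen[OF w0(2)[OF a1(2)]])
        next
          assume a1: "set \<alpha> \<notin> F0" "\<alpha> \<in> S (Pw \<sigma>) k"
          note hs = hs0 isMap_hom[OF EY a1(2)] isMap_hom[OF EX a1(2)] rBE(1) l(3) t(1) s(1) fm p''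
          have e1: "aB k \<alpha> = eY k \<alpha> \<cdot> rBE" using rBE(2)[OF a1(2)] by simp
          have e2: "rBE \<cdot> p2 = l2 \<cdot> t" using t(3) by simp
          have e3: "t \<cdot> q' = s \<cdot> p'" using sq by simp
          have e4: "eY k \<alpha> \<cdot> f m = f k \<cdot> eX k \<alpha>" using nat[OF a1(2)] by simp
          show ?thesis using hs gP[OF a1(2)]
            by (simp add: hom_def h'_def e1 e2 gen[OF e2] e3 gen[OF e3] s(3) gen[OF s(3)] e4 gen[OF e4])
        qed
        then show "aB k \<alpha> \<cdot> p2 \<cdot> c \<cdot> u = aB k \<alpha> \<cdot> p2 \<cdot> q'" using L by simp
      qed
    qed
    show "\<exists>!u. u \<in> hom C U A \<and> rAE \<cdot> u = p' \<and> c \<cdot> u = q'"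
    proof (rule ex1I[of _ u])
      show "u \<in> hom C U A \<and> rAE \<cdot> u = p' \<and> c \<cdot> u = q'" using u(1) u1 u2 by blast
      fix u' assume u': "u' \<in> hom C U A \<and> rAE \<cdot> u' = p' \<and> c \<cdot> u' = q'"
      have u'1: "u' \<in> hom C U A" using u' by blast
      show "u' = u"
      proof (rule isMap_uniq[OF X A u'1 u(1)])
        fix k \<alpha> assume a: "\<alpha> \<in> S ?F k"
        show "aA k \<alpha> \<cdot> u' = aA k \<alpha> \<cdot> u"
        proof (rule S_Un_cases[OF a])
          assume a1: "set \<alpha> \<in> F0" "\<alpha> \<in> S F0 k"
          note hs = isMap_hom[OF A a] isMap_hom[OF A0 a1(2)] u'1 rA(1) p(2) c(1)
          have e1: "aA k \<alpha> = a0 k \<alpha> \<cdot> rA" using rA(2)[OF a1(2)] by simp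
          have e2: "rA = p1 \<cdot> c" using c(2) by simp
          show ?thesis using hs u' u(2)[OF a] g0[OF a1(2)] by (simp add: hom_def h_def e1 e2)
        next
          assume a1: "set \<alpha> \<notin> F0" "\<alpha> \<in> S (Pw \<sigma>) k"
          note hs = isMap_hom[OF A a] isMap_hom[OF EX a1(2)] u'1 rAE(1)
          have e1: "aA k \<alpha> = eX k \<alpha> \<cdot> rAE" using rAE(2)[OF a1(2)] by simp
          show ?thesis using hs u' u(2)[OF a] gP[OF a1(2)] by (simp add: hom_def h'_def e1)
        qed
      qed
    qed
  qed
  have cc: "c \<in> Cov" by (rule pb_cov[OF sc pbA])
  have "p2 \<cdot> c \<in> Cov" using comp_cov[OF cc p2c] c(1) p(3) by (simp add: hom_def)
  then show ?thesis using c(3) by simp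
qed

end

context dcat begin

lemma smap_empty: "smap_into C X U (S {}) Ta h"
  by (simp add: smap_into_def)

lemma CL: assumes X: "simplicial_object C X" and Y: "simplicial_object C Y" and f: "smor C X Y f"
  and hc: "hypercover C Cov X Y f"
  shows "dc F \<Longrightarrow> isMap C X F A aA \<Longrightarrow> isMap C Y F B aB \<Longrightarrow> w \<in> hom C A B \<Longrightarrow>
    (\<And>k \<alpha>. \<alpha> \<in> S F k \<Longrightarrow> aB k \<alpha> \<cdot> w = f k \<cdot> aA k \<alpha>) \<Longrightarrow> w \<in> Cov"
proof (induction "card F" arbitrary: F A aA B aB w rule: less_induct)
  case (less F)
  show ?case
  proof (cases "F = {}")
    case True
    have A: "isMap C X {} A aA" and B: "isMap C Y {} B aB" using less.prems True by simp_all
    obtain j where j: "j \<in> hom C B A" using isMap_ex[OF A isMap_ob[OF B] smap_empty] by blast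
    have w: "w \<in> hom C A B" by (rule less.prems(4))
    have "j \<cdot> w = cId C A"
      by (rule isMap_uniq[OF X A comp_hom[OF w j] id_hom[OF isMap_ob[OF A]]]) simp
    moreover have "w \<cdot> j = cId C B"
      by (rule isMap_uniq[OF Y B comp_hom[OF j w] id_hom[OF isMap_ob[OF B]]]) simp
    ultimately show ?thesis using iso_cov[OF w j] by blast
  next
    case False
    obtain \<sigma> where \<sigma>: "\<sigma> \<in> F" "finite \<sigma>" "\<sigma> \<noteq> {}" "dc (F - {\<sigma>})" "F = (F - {\<sigma>}) \<union> Pw \<sigma>"
      "bd \<sigma> \<subseteq> F - {\<sigma>}" "\<sigma> \<notin> F - {\<sigma>}" "card (F - {\<sigma>}) < card F" "card (bd \<sigma>) < card F"
      using dec[OF less.prems(1) False] by blast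
    have A: "isMap C X ((F - {\<sigma>}) \<union> Pw \<sigma>) A aA" using less.prems(2) \<sigma>(5) by simp
    have B: "isMap C Y ((F - {\<sigma>}) \<union> Pw \<sigma>) B aB" using less.prems(3) \<sigma>(5) by simp
    have wc: "\<And>k \<alpha>. \<alpha> \<in> S ((F - {\<sigma>}) \<union> Pw \<sigma>) k \<Longrightarrow> aB k \<alpha> \<cdot> w = f k \<cdot> aA k \<alpha>"
      using less.prems(5) \<sigma>(5) by simp
    show ?thesis
    proof (rule CL_step[OF X Y f hc \<sigma>(4) \<sigma>(2) \<sigma>(3) \<sigma>(6) \<sigma>(7) A B less.prems(4)])
      fix k \<alpha> assume "\<alpha> \<in> S ((F - {\<sigma>}) \<union> Pw \<sigma>) k"
      then show "aB k \<alpha> \<cdot> w = f k \<cdot> aA k \<alpha>" by (rule wc)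
    next
      fix A0 a0 B0 b0 w0 assume h: "isMap C X (F - {\<sigma>}) A0 a0" "isMap C Y (F - {\<sigma>}) B0 b0" "w0 \<in> hom C A0 B0"
        "\<And>k \<alpha>. \<alpha> \<in> S (F - {\<sigma>}) k \<Longrightarrow> b0 k \<alpha> \<cdot> w0 = f k \<cdot> a0 k \<alpha>"
      show "w0 \<in> Cov" by (rule less.hyps[OF \<sigma>(8) \<sigma>(4) h(1) h(2) h(3) h(4)])
    qed
  qed
qed

end


theorem lemma3p18:
  fixes C :: "('o, 'm) cat" and Cov :: "'m set"
    and X Y Z :: "('o, 'm) sobj" and f g :: "nat \<Rightarrow> 'm"
  assumes "descent_category C Cov"
    and "simplicial_object C X" and "simplicial_object C Y" and "simplicial_object C Z"
    and "smor C X Y f" and "smor C Y Z g"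
    and "hypercover C Cov X Y f"
    and "hypercover C Cov X Z (smor_comp C g f)"
  shows "hypercover C Cov Y Z g"
proof -
  interpret dcat C Cov by unfold_locales (rule assms(1))
  note X = assms(2) and Y = assms(3) and Z = assms(4) and f = assms(5) and g = assms(6)
    and hf = assms(7) and hgf = assms(8)
  show ?thesis unfolding hypercover_def
  proof (intro allI impI)
    fix n M a b u
    assume R0: "is_Map_rel C Y Z g (bdry_simplex n) (std_simplex n) simplex_act M a b"
      and u: "u \<in> hom C (sob Y n) M"
      and ua: "\<forall>k \<alpha>. \<alpha> \<in> bdry_simplex n k \<longrightarrow> sact Y k n \<alpha> = a k \<alpha> \<cdot> u"
      and ub: "\<forall>k \<alpha>. \<alpha> \<in> std_simplex n k \<longrightarrow> sact Z k n \<alpha> \<cdot> g n = b k \<alpha> \<cdot> u"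
    define \<sigma> where "\<sigma> = {0..n}"
    have fin: "finite \<sigma>" and ne: "\<sigma> \<noteq> {}" and cs: "card \<sigma> - 1 = n" by (auto simp: \<sigma>_def)
    have R: "is_Map_rel C Y Z g (S (bd \<sigma>)) (S (Pw \<sigma>)) simplex_act M a b"
      using R0 unfolding bdry_S std_S \<sigma>_def .
    have bdP: "\<alpha> \<in> S (Pw \<sigma>) k" if "\<alpha> \<in> S (bd \<sigma>) k" for \<alpha> k using that by (auto simp: S_def bd_def Pw_def)
    have bsub: "bd \<sigma> \<subseteq> Pw {0..n}" by (auto simp: bd_def Pw_def \<sigma>_def)
    have dl: "delta k n \<alpha>" if "\<alpha> \<in> S (bd \<sigma>) k" for \<alpha> k using bdP[OF that] delta_S unfolding \<sigma>_def by blast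
    have dcb: "dc (bd \<sigma>)" by (rule dc_bd[OF fin])
    note Rp = rel_parts[OF R]
    obtain MX aX where MX: "isMap C X (bd \<sigma>) MX aX" using Mex[OF X dcb] by blast
    obtain MY aY where MY: "isMap C Y (bd \<sigma>) MY aY" using Mex[OF Y dcb] by blast
    obtain w where w: "w \<in> hom C MX MY" "\<And>k \<alpha>. \<alpha> \<in> S (bd \<sigma>) k \<Longrightarrow> aY k \<alpha> \<cdot> w = f k \<cdot> aX k \<alpha>"
      using isMap_ex[OF MY isMap_ob[OF MX] smap_post[OF X Y f isMap_smap[OF MX]]] by blast
    have wc: "w \<in> Cov" by (rule CL[OF X Y f hf dcb MX MY w(1) w(2)])
    obtain r where r: "r \<in> hom C M MY" "\<And>k \<alpha>. \<alpha> \<in> S (bd \<sigma>) k \<Longrightarrow> aY k \<alpha> \<cdot> r = a k \<alpha>"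
      using isMap_ex[OF MY Rp(1) Rp(2)] by blast
    obtain P p1 p2 where pb: "is_pullback C w r P p1 p2"
      using pb_exists[of w r] w(1) r(1) by (auto simp: hom_def)
    have p: "P \<in> cOb C" "p1 \<in> hom C P MX" "p2 \<in> hom C P M" "w \<cdot> p1 = r \<cdot> p2"
      using pb_hom[OF pb] w(1) r(1) by (auto simp: hom_def)
    have p2c: "p2 \<in> Cov" by (rule pb_cov[OF wc pb])
    have S4a: "is_Map_rel C X Z (\<lambda>k. g k \<cdot> f k) (S (bd \<sigma>)) (S (Pw \<sigma>)) simplex_act P (\<lambda>k \<alpha>. aX k \<alpha> \<cdot> p1) (\<lambda>k \<alpha>. b k \<alpha> \<cdot> p2)"
      by (rule S4[OF X Y Z f MX MY w(1) w(2) R r(1) r(2) smor_hom[OF g] pb])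
    have sx: "smap_into C X (sob X n) (S (bd \<sigma>)) simplex_act (\<lambda>k \<alpha>. sact X k n \<alpha>)" by (rule sact_smap[OF X bsub])
    obtain x0 where x0: "x0 \<in> hom C (sob X n) MX" "\<And>k \<alpha>. \<alpha> \<in> S (bd \<sigma>) k \<Longrightarrow> aX k \<alpha> \<cdot> x0 = sact X k n \<alpha>"
      using isMap_ex[OF MX sob_ob[OF X] sx] by blast
    have fn: "f n \<in> hom C (sob X n) (sob Y n)" by (rule smor_hom[OF f])
    have eq1: "w \<cdot> x0 = r \<cdot> u \<cdot> f n"
    proof (rule isMap_uniq[OF Y MY comp_hom[OF x0(1) w(1)] comp_hom[OF comp_hom[OF fn u] r(1)]])
      fix k \<alpha> assume al: "\<alpha> \<in> S (bd \<sigma>) k"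
      note hs = isMap_hom[OF MX al] isMap_hom[OF MY al] smor_hom[OF f, of k] sact_hom[OF X dl[OF al]] sact_hom[OF Y dl[OF al]]
        w(1) x0(1) r(1) u fn smap_hom[OF Rp(2) al]
      have e1: "a k \<alpha> \<cdot> u = sact Y k n \<alpha>" using ua al unfolding bdry_S \<sigma>_def by simp
      have e2: "f k \<cdot> sact X k n \<alpha> = sact Y k n \<alpha> \<cdot> f n" by (rule smor_nat[OF f dl[OF al]])
      show "aY k \<alpha> \<cdot> w \<cdot> x0 = aY k \<alpha> \<cdot> r \<cdot> u \<cdot> f n"
        using hs by (simp add: hom_def w(2)[OF al] gen[OF w(2)[OF al]] x0(2)[OF al] e2 r(2)[OF al]
            gen[OF r(2)[OF al]] e1 gen[OF e1])
    qed
    obtain v where v: "v \<in> hom C (sob X n) P" "p1 \<cdot> v = x0" "p2 \<cdot> v = u \<cdot> f n"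
      using pb_ex[OF pb, of x0 "sob X n" "u \<cdot> f n"] x0(1) comp_hom[OF fn u] w(1) r(1) eq1 by (auto simp: hom_def)
    have vc: "v \<in> Cov"
    proof -
      have Rgf: "is_Map_rel C X Z (smor_comp C g f) (bdry_simplex n) (std_simplex n) simplex_act P (\<lambda>k \<alpha>. aX k \<alpha> \<cdot> p1) (\<lambda>k \<alpha>. b k \<alpha> \<cdot> p2)"
        using S4a unfolding smor_comp_def bdry_S std_S \<sigma>_def .
      have c1: "\<forall>k \<alpha>. \<alpha> \<in> bdry_simplex n k \<longrightarrow> sact X k n \<alpha> = (aX k \<alpha> \<cdot> p1) \<cdot> v"
      proof (intro allI impI)
        fix k \<alpha> assume "\<alpha> \<in> bdry_simplex n k"
        then have al: "\<alpha> \<in> S (bd \<sigma>) k" unfolding bdry_S \<sigma>_def .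
        show "sact X k n \<alpha> = (aX k \<alpha> \<cdot> p1) \<cdot> v" using assoc[OF v(1) p(2) isMap_hom[OF MX al]] v(2) x0(2)[OF al] by simp
      qed
      have c2: "\<forall>k \<alpha>. \<alpha> \<in> std_simplex n k \<longrightarrow> sact Z k n \<alpha> \<cdot> smor_comp C g f n = (b k \<alpha> \<cdot> p2) \<cdot> v"
      proof (intro allI impI)
        fix k \<alpha> assume "\<alpha> \<in> std_simplex n k"
        then have al: "\<alpha> \<in> S (Pw \<sigma>) k" unfolding std_S \<sigma>_def .
        have dk: "delta k n \<alpha>" using al delta_S unfolding \<sigma>_def by blast
        have e: "b k \<alpha> \<cdot> u = sact Z k n \<alpha> \<cdot> g n" using ub al unfolding std_S \<sigma>_def by simp
        note hs = smap_hom[OF Rp(3) al] sact_hom[OF Z dk] smor_hom[OF g, of n] fn u v(1) p(3)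
        show "sact Z k n \<alpha> \<cdot> smor_comp C g f n = (b k \<alpha> \<cdot> p2) \<cdot> v"
          using hs by (simp add: hom_def smor_comp_def v(3) gen[OF v(3)] e gen[OF e])
      qed
      show ?thesis using hgf Rgf v(1) c1 c2 unfolding hypercover_def by blast
    qed
    \<comment> \<open>f_n is a cover\<close>
    have EYn: "isMap C Y (Pw \<sigma>) (sob Y n) (\<lambda>k \<alpha>. sact Y k n \<alpha>)"
    proof (rule isMap_cong[OF dc_Pw[OF fin]])
      show "isMap C Y (Pw \<sigma>) (sob Y n) (\<lambda>k \<alpha>. sact Y k n (rl \<sigma> \<alpha>))" using PM[OF Y fin ne] unfolding cs .
      fix k \<alpha> assume "\<alpha> \<in> S (Pw \<sigma>) k"
      then have "set \<alpha> \<subseteq> {0..n}" by (auto simp: S_def Pw_def \<sigma>_def)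
      then show "sact Y k n (rl \<sigma> \<alpha>) = sact Y k n \<alpha>" using rl_id unfolding \<sigma>_def by simp
    qed
    have TR0: "is_Map_rel C Y Y (\<lambda>k. cId C (sob Y k)) (S (bd \<sigma>)) (S (Pw \<sigma>)) simplex_act (sob Y n) (\<lambda>k \<alpha>. sact Y k n \<alpha>) (\<lambda>k \<alpha>. sact Y k n \<alpha>)"
      by (rule TR[OF Y EYn]) (use bdP in blast)
    obtain t where t: "t \<in> hom C (sob Y n) MY" "\<And>k \<alpha>. \<alpha> \<in> S (bd \<sigma>) k \<Longrightarrow> aY k \<alpha> \<cdot> t = sact Y k n \<alpha>"
      using isMap_ex[OF MY sob_ob[OF Y] smap_mono[OF isMap_smap[OF EYn]]] bdP by blast
    obtain P' q1 q2 where pb': "is_pullback C w t P' q1 q2"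
      using pb_exists[of w t] w(1) t(1) by (auto simp: hom_def)
    have q: "P' \<in> cOb C" "q1 \<in> hom C P' MX" "q2 \<in> hom C P' (sob Y n)" "w \<cdot> q1 = t \<cdot> q2"
      using pb_hom[OF pb'] w(1) t(1) by (auto simp: hom_def)
    have q2c: "q2 \<in> Cov" by (rule pb_cov[OF wc pb'])
    have S4b: "is_Map_rel C X Y (\<lambda>k. cId C (sob Y k) \<cdot> f k) (S (bd \<sigma>)) (S (Pw \<sigma>)) simplex_act P' (\<lambda>k \<alpha>. aX k \<alpha> \<cdot> q1) (\<lambda>k \<alpha>. sact Y k n \<alpha> \<cdot> q2)"
      by (rule S4[OF X Y Y f MX MY w(1) w(2) TR0 t(1) t(2) id_hom[OF sob_ob[OF Y]] pb'])
    have eq2: "w \<cdot> x0 = t \<cdot> f n"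
    proof (rule isMap_uniq[OF Y MY comp_hom[OF x0(1) w(1)] comp_hom[OF fn t(1)]])
      fix k \<alpha> assume al: "\<alpha> \<in> S (bd \<sigma>) k"
      note hs = isMap_hom[OF MX al] isMap_hom[OF MY al] smor_hom[OF f, of k] sact_hom[OF X dl[OF al]] sact_hom[OF Y dl[OF al]]
        w(1) x0(1) t(1) fn
      have e2: "f k \<cdot> sact X k n \<alpha> = sact Y k n \<alpha> \<cdot> f n" by (rule smor_nat[OF f dl[OF al]])
      show "aY k \<alpha> \<cdot> w \<cdot> x0 = aY k \<alpha> \<cdot> t \<cdot> f n"
        using hs by (simp add: hom_def w(2)[OF al] gen[OF w(2)[OF al]] x0(2)[OF al] e2 t(2)[OF al] gen[OF t(2)[OF al]])
    qed
    obtain v' where v': "v' \<in> hom C (sob X n) P'" "q1 \<cdot> v' = x0" "q2 \<cdot> v' = f n"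
      using pb_ex[OF pb', of x0 "sob X n" "f n"] x0(1) fn w(1) t(1) eq2 by (auto simp: hom_def)
    have v'c: "v' \<in> Cov"
    proof -
      have Rf: "is_Map_rel C X Y f (bdry_simplex n) (std_simplex n) simplex_act P' (\<lambda>k \<alpha>. aX k \<alpha> \<cdot> q1) (\<lambda>k \<alpha>. sact Y k n \<alpha> \<cdot> q2)"
        using S4b unfolding id_comp_fun[OF f] bdry_S std_S \<sigma>_def .
      have c1: "\<forall>k \<alpha>. \<alpha> \<in> bdry_simplex n k \<longrightarrow> sact X k n \<alpha> = (aX k \<alpha> \<cdot> q1) \<cdot> v'"
      proof (intro allI impI)
        fix k \<alpha> assume "\<alpha> \<in> bdry_simplex n k"
        then have al: "\<alpha> \<in> S (bd \<sigma>) k" unfolding bdry_S \<sigma>_def .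
        show "sact X k n \<alpha> = (aX k \<alpha> \<cdot> q1) \<cdot> v'" using assoc[OF v'(1) q(2) isMap_hom[OF MX al]] v'(2) x0(2)[OF al] by simp
      qed
      have c2: "\<forall>k \<alpha>. \<alpha> \<in> std_simplex n k \<longrightarrow> sact Y k n \<alpha> \<cdot> f n = (sact Y k n \<alpha> \<cdot> q2) \<cdot> v'"
      proof (intro allI impI)
        fix k \<alpha> assume "\<alpha> \<in> std_simplex n k"
        then have dk: "delta k n \<alpha>" by (simp add: std_simplex_def)
        show "sact Y k n \<alpha> \<cdot> f n = (sact Y k n \<alpha> \<cdot> q2) \<cdot> v'" using assoc[OF v'(1) q(3) sact_hom[OF Y dk]] v'(3) by simp
      qed
      show ?thesis using hf Rf v'(1) c1 c2 unfolding hypercover_def by blast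
    qed
    have fnc: "f n \<in> Cov" using comp_cov[OF v'c q2c] v'(1) q(3) v'(3) by (simp add: hom_def)
    have ufc: "u \<cdot> f n \<in> Cov" using comp_cov[OF vc p2c] v(1) p(3) v(3) by (simp add: hom_def)
    show "u \<in> Cov" using cancel_cov[OF _ _ _ fnc ufc] fn u by (simp add: hom_def)
  qed
qed


end
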